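(* Let $\phi$ be a PDL formula in negation normal form, and let $T$ be an expanded tableau whose root is $r=(\{\phi\} :: [\,],\bot,\emptyset,\emptyset :: \mathrm{stat},\mathrm{uev})$, with $\mathrm{stat}$ and $\mathrm{uev}$ determined from the children of $r$ by the rules. If $r$ is open (i.e. $\mathrm{stat}_r=\mathbf{open}$), then there exists a Hintikka structure for $\phi$.
   Context: Syntax of PDL. Fix disjoint countably infinite sets $\mathrm{AFml}$ (propositional atoms $p,q,\dots$) and $\mathrm{APrg}$ (atomic programs $a,b,\dots$). Formulae and programs are defined by mutual induction. Every atom is a formula and every atomic program is a program. If $\varphi,\psi$ are formulae, then $\neg\varphi$, $\varphi\wedge\psi$, $\varphi\vee\psi$ are formulae and $\varphi?$ is a program. If $\varphi$ is a formula and $\alpha$ a program, then $\langle\alpha\rangle\varphi$ and $[\alpha]\varphi$ are formulae. If $\alpha,\beta$ are programs, then $\alpha;\beta$, $\alpha\cup\beta$ and $\alpha^*$ are programs. A $\langle\rangle$-formula is any $\langle\alpha\rangle\varphi$. It is a non-atomic diamond formula if $\alpha\notin\mathrm{APrg}$. A $\langle{*}\rangle$-formula is any $\langle\alpha^*\rangle\varphi$. NNF means $\neg$ occurs only directly in front of atoms. $\mathrm{nnf}(\varphi)$ is the equivalent NNF formula obtained by pushing negations inward, and ${\sim}\varphi:=\mathrm{nnf}(\neg\varphi)$. Let $\mathrm{ppre}(\varphi):=\{\langle\alpha_1\rangle\cdots\langle\alpha_k\rangle\varphi: k\ge0,\ \alpha_i \text{ programs}\}$. Hintikka structures. - A structure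 $(W,R,L)$ for $\phi$ consists of a nonempty set $W$, a relation $R_a\subseteq W\times W$ for each $a\in\mathrm{APrg}$, and a labelling $L:W\to 2^{\mathrm{Fml}}$ with $\phi\in L(v)$ for some $v\in W$. - The relation $\leadsto$ is defined by: $\langle\alpha;\beta\rangle\chi\leadsto\langle\alpha\rangle\langle\beta\rangle\chi$; $\langle\alpha\cup\beta\rangle\chi\leadsto\langle\alpha\rangle\chi$ and $\langle\alpha\cup\beta\rangle\chi\leadsto\langle\beta\rangle\chi$; $\langle\alpha^*\rangle\chi\leadsto\chi$ and $\langle\alpha^*\rangle\chi\leadsto\langle\alpha\rangle\langle\alpha^*\rangle\chi$; $\langle\theta?\rangle\chi\leadsto\chi$; and nothing else. - A fulfilling chain for $(\varphi,\beta,w)$ in $H=(W,R,L)$ is a sequence $(w_0,\psi_0),\dots,(w_n,\psi_n)$, $n\ge0$, such that: - each $w_i\in W$, each $\psi_i\in\mathrm{ppre}(\varphi)$, and $\psi_i\in L(w_i)$; - $w_0=w$, $\psi_0=\langle\beta\rangle\varphi$, $\psi_n=\varphi$, and $\psi_i\ne\varphi$ for $i<n$; - for $i<n$: if $\psi_i=\langle a\rangle\chi$ with $a\in\mathrm{APrg}$, then $\psi_{i+1}=\chi$ and $(w_i,w_{i+1})\in R_a$; otherwise $\psi_i\leadsto\psi_{i+1}$ and $w_i=w_{i+1}$. - $\alpha$-formulae with components $(\alpha_1;\alpha_2)$ are: $\varphi\wedge\psi:(\varphi;\psi)$; $[\alpha\cup\beta]\varphi:([\alpha]\varphi;[\beta]\varphi)$;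 $[\alpha^*]\varphi:(\varphi;[\alpha][\alpha^*]\varphi)$; $\langle\psi?\rangle\varphi:(\varphi;\psi)$; $\langle\alpha;\beta\rangle\varphi:(\langle\alpha\rangle\langle\beta\rangle\varphi;\text{none})$; $[\alpha;\beta]\varphi:([\alpha][\beta]\varphi;\text{none})$. - $\beta$-formulae with components $(\beta_1;\beta_2)$ are: $\varphi\vee\psi:(\varphi;\psi)$; $\langle\alpha\cup\beta\rangle\varphi:(\langle\alpha\rangle\varphi;\langle\beta\rangle\varphi)$; $\langle\alpha^*\rangle\varphi:(\varphi;\langle\alpha\rangle\langle\alpha^*\rangle\varphi)$; $[\psi?]\varphi:(\varphi;{\sim}\psi)$. - A Hintikka structure for $\phi$ is a structure for $\phi$ such that for all $w\in W$: - (H1) $\neg p\in L(w)\Rightarrow p\notin L(w)$; - (H2) if an $\alpha$-formula is in $L(w)$ then its component(s) are in $L(w)$; - (H3) if a $\beta$-formula is in $L(w)$ then $\beta_1\in L(w)$ or $\beta_2\in L(w)$; - (H4) $\langle a\rangle\varphi\in L(w)\Rightarrow$ there is $v$ with $(w,v)\in R_a$ and $\varphi\in L(v)$; - (H5) $[a]\varphi\in L(w)\Rightarrow\varphi\in L(v)$ for all $v$ with $(w,v)\in R_a$; - (H6) $\langle\alpha^*\rangle\varphi\in L(w)\Rightarrow$ there is a fulfilling chain for $(\varphi,\alpha^*,w)$ in $H$. Tableau nodes. A node has the form $(\Gamma :: \mathrm{HCr},\mathrm{Nx},\mathrm{BD},\mathrm{BB} :: \mathrm{stat},\mathrm{uev})$,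 where: - $\Gamma$ is a finite set of formulae; - $\mathrm{HCr}$ is a finite list of pairs $(\varphi,\Delta)$ with $\varphi\in\Delta$, with length $\mathrm{len}(\mathrm{HCr})$, $j$-th entry $\mathrm{HCr}[j]$, and concatenation $@$; - $\mathrm{Nx}$ is $\bot$ or a formula; - $\mathrm{BD},\mathrm{BB}$ are sets of formulae; - $\mathrm{stat}\in\{\mathbf{unsat},\mathbf{open},\mathbf{barred}\}$; - $\mathrm{uev}$ is a partial function from pairs ($\langle\rangle$-formula, $\langle{*}\rangle$-formula) to positive integers ($\bot$ = undefined). Auxiliary functions: - $\mathrm{uev}_\bot$ is everywhere undefined. - $\mathrm{tst}(\chi)=\chi$ if $\chi$ is a non-atomic diamond formula, else $\bot$. - $\mathrm{bl}(\chi,\Gamma)=\Gamma$ if $\chi$ is a non-atomic diamond formula, else $\emptyset$. - $\min_\bot(f,g)(\chi_1,\chi_2)$ is undefined if either value is undefined, else the minimum. Rules. The premise set is the displayed principal formula disjointly united with $\Gamma$. Unmentioned histories are copied from parent to children; one-child rules copy the child's $\mathrm{stat}$ to the parent. Terminal rules: - (id): applicable if $\{p,\neg p\}\subseteq\Gamma$; set $\mathrm{stat}:=\mathbf{unsat}$ and $\mathrm{uev}:=\mathrm{uev}_\bot$. - ($\langle*\rangle_2$): premise $\langle\alpha^*\rangle\varphi,\Gamma$ with $\mathrm{Nx}\in\{\bot,\langle\alpha^*\rangle\varphi\}$ and $\langle\alpha^*\rangle\varphi\in\mathrm{BD}$; set $\mathrm{stat}:=\mathbf{barred}$ and $\mathrm{uev}:=\mathrm{uev}_\bot$.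 Linear rules with $\mathrm{Nx}=\bot$, in each of which $\mathrm{uev}(\chi_1,\chi_2)=\mathrm{uev}_1(\chi_1,\chi_2)$ if $\chi_1\in\Gamma$, else $\bot$: - ($\wedge$): $\varphi\wedge\psi,\Gamma$ has the child $\{\varphi,\psi\}\cup\Gamma$; - ($[\cup]$): $[\alpha\cup\beta]\varphi,\Gamma$ has the child $\{[\alpha]\varphi,[\beta]\varphi\}\cup\Gamma$; - ($[;]$): $[\alpha;\beta]\varphi,\Gamma$ has the child $\{[\alpha][\beta]\varphi\}\cup\Gamma$; - ($[*]$): $[\alpha^*]\varphi,\Gamma$ has a child with set $\Gamma$ if $[\alpha^*]\varphi\in\mathrm{BB}$ and $\{\varphi,[\alpha][\alpha^*]\varphi\}\cup\Gamma$ otherwise, and $\mathrm{BB}_1=\{[\alpha^*]\varphi\}\cup\mathrm{BB}$. Further linear rules: - ($\langle;\rangle$): premise $\langle\alpha;\beta\rangle\varphi,\Gamma$ with $\mathrm{Nx}\in\{\bot,\langle\alpha;\beta\rangle\varphi\}$. The child is $\{\langle\alpha\rangle\langle\beta\rangle\varphi\}\cup\Gamma$ with $\mathrm{Nx}_1=\mathrm{tst}(\langle\alpha\rangle\langle\beta\rangle\varphi)$ and $\mathrm{BD}_1=\mathrm{bl}(\langle\alpha\rangle\langle\beta\rangle\varphi,\mathrm{BD})$. Set $\mathrm{uev}(\chi_1,\chi_2)$ to be $\mathrm{uev}_1(\langle\alpha\rangle\langle\beta\rangle\varphi,\chi_2)$ if $\chi_1$ is the principal formula; $\mathrm{uev}_1(\chi_1,\chi_2)$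 if $\chi_1\in\Gamma$; and $\bot$ otherwise. - ($\langle?\rangle$): premise $\langle\psi?\rangle\varphi,\Gamma$ with $\mathrm{Nx}\in\{\bot,\langle\psi?\rangle\varphi\}$. The child is $\{\psi,\varphi\}\cup\Gamma$ with $\mathrm{Nx}_1=\mathrm{tst}(\varphi)$ and $\mathrm{BD}_1=\mathrm{bl}(\varphi,\mathrm{BD})$. Set $\mathrm{uev}(\chi_1,\chi_2)$ to be $\mathrm{uev}_1(\varphi,\chi_2)$ if $\chi_1$ is the principal formula; $\mathrm{uev}_1(\chi_1,\chi_2)$ if $\chi_1\in\Gamma$; and $\bot$ otherwise. Branching rules ($i=1,2$): - ($\vee$): premise $\varphi_1\vee\varphi_2,\Gamma$ with $\mathrm{Nx}=\bot$; children $\{\varphi_i\}\cup\Gamma$. - ($[?]$): premise $[\psi?]\varphi,\Gamma$ with $\mathrm{Nx}=\bot$; children $\{{\sim}\psi\}\cup\Gamma$ and $\{\varphi\}\cup\Gamma$. - For both of these, $\mathrm{uev}'_i(\chi_1,\chi_2)=\mathrm{uev}_i(\chi_1,\chi_2)$ if $\chi_1\in\Gamma$, else $\bot$. - ($\langle\cup\rangle$): premise $\langle\alpha_1\cup\alpha_2\rangle\varphi,\Gamma$ with $\mathrm{Nx}\in\{\bot,\text{principal formula}\}$. The children are $\{\langle\alpha_i\rangle\varphi\}\cup\Gamma$ with $\mathrm{Nx}_i=\mathrm{tst}(\langle\alpha_i\rangle\varphi)$ and $\mathrm{BD}_i=\mathrm{bl}(\langle\alpha_i\rangle\varphi,\mathrm{BD})$.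 Set $\mathrm{uev}'_i(\chi_1,\chi_2)$ to be $\mathrm{uev}_i(\langle\alpha_i\rangle\varphi,\chi_2)$ if $\chi_1$ is the principal formula; $\mathrm{uev}_i(\chi_1,\chi_2)$ if $\chi_1\in\Gamma$; and $\bot$ otherwise. - ($\langle*\rangle_1$): premise $\langle\alpha^*\rangle\varphi,\Gamma$ with $\mathrm{Nx}\in\{\bot,\langle\alpha^*\rangle\varphi\}$ and $\langle\alpha^*\rangle\varphi\notin\mathrm{BD}$. - Child 1 is $\{\varphi\}\cup\Gamma$ with $\mathrm{Nx}_1=\mathrm{tst}(\varphi)$ and $\mathrm{BD}_1=\mathrm{bl}(\varphi,\{\langle\alpha^*\rangle\varphi\}\cup\mathrm{BD})$. - Child 2 is $\{\langle\alpha\rangle\langle\alpha^*\rangle\varphi\}\cup\Gamma$ with $\mathrm{Nx}_2=\mathrm{tst}(\langle\alpha\rangle\langle\alpha^*\rangle\varphi)$ and $\mathrm{BD}_2=\mathrm{bl}(\langle\alpha\rangle\langle\alpha^*\rangle\varphi,\{\langle\alpha^*\rangle\varphi\}\cup\mathrm{BD})$. - $\mathrm{uev}'_1(\chi_1,\chi_2)$ is $\bot$ if $\chi_1=\chi_2=\langle\alpha^*\rangle\varphi$; $\mathrm{uev}_1(\varphi,\chi_2)$ if $\chi_1=\langle\alpha^*\rangle\varphi\ne\chi_2$; $\mathrm{uev}_1(\chi_1,\chi_2)$ if $\chi_1\in\Gamma$; and $\bot$ otherwise. - $\mathrm{uev}'_2(\chi_1,\chi_2)$ is $\mathrm{uev}_2(\langle\alpha\rangle\langle\alpha^*\rangle\varphi,\chi_2)$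 if $\chi_1=\langle\alpha^*\rangle\varphi$; $\mathrm{uev}_2(\chi_1,\chi_2)$ if $\chi_1\in\Gamma$; and $\bot$ otherwise. For all branching rules, the parent's variables are computed as follows. - $\mathrm{stat}=\mathbf{unsat}$ if both children are $\mathbf{unsat}$; $\mathbf{open}$ if some child is $\mathbf{open}$; and $\mathbf{barred}$ otherwise. - $\mathrm{uev}=\mathrm{uev}_\bot$ if $\mathrm{stat}\ne\mathbf{open}$. - Otherwise $\mathrm{uev}=\mathrm{uev}'_i$ if only child $i$ is open, and $\min_\bot(\mathrm{uev}'_1,\mathrm{uev}'_2)$ if both are open. Existential rule ($\langle\rangle$). The premise set is $\{\langle a_1\rangle\varphi_1,\dots,\langle a_{n+m}\rangle\varphi_{n+m}\}\uplus[-]\Delta\uplus\Gamma$, $n+m\ge0$, subject to the following conditions. - Each $a_i\in\mathrm{APrg}$. - $\Gamma$ consists only of atoms and negated atoms, with no $\{p,\neg p\}\subseteq\Gamma$. - $[-]\Delta$ consists only of formulae $[a]\psi$ with $a\in\mathrm{APrg}$. - Let $\Delta_i=\{\psi:[a_i]\psi\in[-]\Delta\}$. For $i\le n$, the pair $(\varphi_i,\{\varphi_i\}\cup\Delta_i)$ is not an entry of $\mathrm{HCr}$. For $n<k\le n+m$, $(\varphi_k,\{\varphi_k\}\cup\Delta_k)=\mathrm{HCr}[j]$ for some $j$. The children, for $i\le n$, are $\{\varphi_i\}\cup\Delta_i$ with $\mathrm{HCr}_i=\mathrm{HCr}\,@\,[(\varphi_i,\{\varphi_i\}\cup\Delta_i)]$,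 $\mathrm{Nx}_i=\mathrm{tst}(\varphi_i)$ and $\mathrm{BD}_i=\mathrm{BB}_i=\emptyset$. The parent's variables are computed as follows. - $\mathrm{stat}=\mathbf{unsat}$ if some $i\le n$ has $\mathrm{stat}_i\ne\mathbf{open}$, or there exist $i\le n$ and a $\langle{*}\rangle$-formula $\psi$ with $\varphi_i\in\mathrm{ppre}(\psi)$ and $\mathrm{uev}_i(\varphi_i,\psi)$ defined and $>\mathrm{len}(\mathrm{HCr})$. Otherwise $\mathrm{stat}=\mathbf{open}$. - For $n<k\le n+m$, $\mathrm{uev}_k$ is constantly $j$, where $\mathrm{HCr}[j]=(\varphi_k,\{\varphi_k\}\cup\Delta_k)$. - $\mathrm{uev}(\chi_1,\chi_2)=\mathrm{uev}_i(\varphi_i,\chi_2)$ if $\mathrm{stat}=\mathbf{open}$, $\chi_2$ is a $\langle{*}\rangle$-formula, $\chi_1\in\mathrm{ppre}(\chi_2)$ and $\chi_1=\langle a_i\rangle\varphi_i$ for some $i\le n+m$. Otherwise $\mathrm{uev}(\chi_1,\chi_2)=\bot$. Tableau. A tableau is a tree of nodes in which the children of each node come from a single application of one applicable rule (free choice), and each parent's $\mathrm{stat}$ and $\mathrm{uev}$ are computed from its children. It is expanded if no rule can be applied to any leaf. *)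

theory Defs
  imports Main
begin

text \<open>Propositional atoms and atomic programs are both indexed by nat
  (two countably infinite, disjoint sets, since they live in different constructors).\<close>

datatype fml = Atom nat | Neg fml | And fml fml | Or fml fml
  | Dia prg fml | Box prg fml
and prg = AP nat | Test fml | Seq prg prg | Choice prg prg | Star prg

fun is_nnf :: "fml \<Rightarrow> bool" and is_nnf_prg :: "prg \<Rightarrow> bool" where
  "is_nnf (Atom p) = True"
| "is_nnf (Neg f) = (\<exists>p. f = Atom p)"
| "is_nnf (And a b) = (is_nnf a \<and> is_nnf b)"
| "is_nnf (Or a b) = (is_nnf a \<and> is_nnf b)"
| "is_nnf (Dia a f) = (is_nnf_prg a \<and> is_nnf f)"
| "is_nnf (Box a f) = (is_nnf_prg a \<and> is_nnf f)"
| "is_nnf_prg (AP a) = True"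
| "is_nnf_prg (Test f) = is_nnf f"
| "is_nnf_prg (Seq a b) = (is_nnf_prg a \<and> is_nnf_prg b)"
| "is_nnf_prg (Choice a b) = (is_nnf_prg a \<and> is_nnf_prg b)"
| "is_nnf_prg (Star a) = is_nnf_prg a"

fun nnf :: "fml \<Rightarrow> fml" and nnfn :: "fml \<Rightarrow> fml" and nnfp :: "prg \<Rightarrow> prg" where
  "nnf (Atom p) = Atom p"
| "nnf (Neg f) = nnfn f"
| "nnf (And a b) = And (nnf a) (nnf b)"
| "nnf (Or a b) = Or (nnf a) (nnf b)"
| "nnf (Dia a f) = Dia (nnfp a) (nnf f)"
| "nnf (Box a f) = Box (nnfp a) (nnf f)"
| "nnfn (Atom p) = Neg (Atom p)"
| "nnfn (Neg f) = nnf f"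
| "nnfn (And a b) = Or (nnfn a) (nnfn b)"
| "nnfn (Or a b) = And (nnfn a) (nnfn b)"
| "nnfn (Dia a f) = Box (nnfp a) (nnfn f)"
| "nnfn (Box a f) = Dia (nnfp a) (nnfn f)"
| "nnfp (AP a) = AP a"
| "nnfp (Test f) = Test (nnf f)"
| "nnfp (Seq a b) = Seq (nnfp a) (nnfp b)"
| "nnfp (Choice a b) = Choice (nnfp a) (nnfp b)"
| "nnfp (Star a) = Star (nnfp a)"

definition sim :: "fml \<Rightarrow> fml" where "sim f = nnf (Neg f)"

definition is_atdia :: "fml \<Rightarrow> bool" where
  "is_atdia f \<longleftrightarrow> (\<exists>a g. f = Dia (AP a) g)"
definition is_atbox :: "fml \<Rightarrow> bool" where
  "is_atbox f \<longleftrightarrow> (\<exists>a g. f = Box (AP a) g)"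
definition is_lit :: "fml \<Rightarrow> bool" where
  "is_lit f \<longleftrightarrow> (\<exists>p. f = Atom p \<or> f = Neg (Atom p))"
definition is_nadia :: "fml \<Rightarrow> bool" where
  "is_nadia f \<longleftrightarrow> (\<exists>a g. f = Dia a g) \<and> \<not> is_atdia f"
definition is_stardia :: "fml \<Rightarrow> bool" where
  "is_stardia f \<longleftrightarrow> (\<exists>a g. f = Dia (Star a) g)"

inductive_set ppre :: "fml \<Rightarrow> fml set" for \<phi> :: fml where
  ppre_base: "\<phi> \<in> ppre \<phi>"
| ppre_step: "\<psi> \<in> ppre \<phi> \<Longrightarrow> Dia a \<psi> \<in> ppre \<phi>"

text \<open>The relation \<leadsto>: leads f is the set of g with f \<leadsto> g.\<close>
fun leads :: "fml \<Rightarrow> fml set" where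
  "leads (Dia (Seq a b) x) = {Dia a (Dia b x)}"
| "leads (Dia (Choice a b) x) = {Dia a x, Dia b x}"
| "leads (Dia (Star a) x) = {x, Dia a (Dia (Star a) x)}"
| "leads (Dia (Test t) x) = {x}"
| "leads _ = {}"

fun atdia_parts :: "fml \<Rightarrow> (nat \<times> fml) option" where
  "atdia_parts (Dia (AP a) x) = Some (a, x)"
| "atdia_parts _ = None"

definition fulfilling_chain ::
  "'w set \<Rightarrow> (nat \<Rightarrow> ('w \<times> 'w) set) \<Rightarrow> ('w \<Rightarrow> fml set) \<Rightarrow> fml \<Rightarrow> prg \<Rightarrow> 'w
   \<Rightarrow> ('w \<times> fml) list \<Rightarrow> bool" where
  "fulfilling_chain W R L \<phi> \<beta> w c \<longleftrightarrow>
     c \<noteq> [] \<and>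
     (\<forall>i<length c. fst (c!i) \<in> W \<and> snd (c!i) \<in> ppre \<phi> \<and> snd (c!i) \<in> L (fst (c!i))) \<and>
     c!0 = (w, Dia \<beta> \<phi>) \<and> snd (last c) = \<phi> \<and>
     (\<forall>i. i < length c - 1 \<longrightarrow> snd (c!i) \<noteq> \<phi>) \<and>
     (\<forall>i. Suc i < length c \<longrightarrow>
        (case atdia_parts (snd (c!i)) of
           Some (a, \<chi>) \<Rightarrow> snd (c!Suc i) = \<chi> \<and> (fst (c!i), fst (c!Suc i)) \<in> R a
         | None \<Rightarrow> snd (c!Suc i) \<in> leads (snd (c!i)) \<and> fst (c!i) = fst (c!Suc i)))"

text \<open>alpha-formulae and their components (empty set if not an alpha-formula)\<close>
fun alpha_comps :: "fml \<Rightarrow> fml set" where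
  "alpha_comps (And a b) = {a, b}"
| "alpha_comps (Box (Choice a b) x) = {Box a x, Box b x}"
| "alpha_comps (Box (Star a) x) = {x, Box a (Box (Star a) x)}"
| "alpha_comps (Dia (Test \<psi>) x) = {x, \<psi>}"
| "alpha_comps (Dia (Seq a b) x) = {Dia a (Dia b x)}"
| "alpha_comps (Box (Seq a b) x) = {Box a (Box b x)}"
| "alpha_comps _ = {}"

fun beta_comps :: "fml \<Rightarrow> (fml \<times> fml) option" where
  "beta_comps (Or a b) = Some (a, b)"
| "beta_comps (Dia (Choice a b) x) = Some (Dia a x, Dia b x)"
| "beta_comps (Dia (Star a) x) = Some (x, Dia a (Dia (Star a) x))"
| "beta_comps (Box (Test \<psi>) x) = Some (x, sim \<psi>)"
| "beta_comps _ = None"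

definition is_structure ::
  "'w set \<Rightarrow> (nat \<Rightarrow> ('w \<times> 'w) set) \<Rightarrow> ('w \<Rightarrow> fml set) \<Rightarrow> fml \<Rightarrow> bool" where
  "is_structure W R L \<phi> \<longleftrightarrow> W \<noteq> {} \<and> (\<forall>a. R a \<subseteq> W \<times> W) \<and> (\<exists>v\<in>W. \<phi> \<in> L v)"

definition hintikka_structure ::
  "'w set \<Rightarrow> (nat \<Rightarrow> ('w \<times> 'w) set) \<Rightarrow> ('w \<Rightarrow> fml set) \<Rightarrow> fml \<Rightarrow> bool" where
  "hintikka_structure W R L \<phi> \<longleftrightarrow> is_structure W R L \<phi> \<and>
    (\<forall>w\<in>W.
      (\<forall>p. Neg (Atom p) \<in> L w \<longrightarrow> Atom p \<notin> L w) \<and>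
      (\<forall>f\<in>L w. alpha_comps f \<subseteq> L w) \<and>
      (\<forall>f\<in>L w. \<forall>b1 b2. beta_comps f = Some (b1, b2) \<longrightarrow> b1 \<in> L w \<or> b2 \<in> L w) \<and>
      (\<forall>a \<phi>'. Dia (AP a) \<phi>' \<in> L w \<longrightarrow> (\<exists>v. (w, v) \<in> R a \<and> \<phi>' \<in> L v)) \<and>
      (\<forall>a \<phi>' v. Box (AP a) \<phi>' \<in> L w \<longrightarrow> (w, v) \<in> R a \<longrightarrow> \<phi>' \<in> L v) \<and>
      (\<forall>\<alpha> \<phi>'. Dia (Star \<alpha>) \<phi>' \<in> L w \<longrightarrow> (\<exists>c. fulfilling_chain W R L \<phi>' (Star \<alpha>) w c)))"

datatype stat = Unsat | Open | Barred

text \<open>uev: partial function (None = undefined) from pairs of formulae to positive integers\<close>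
type_synonym uevt = "fml \<Rightarrow> fml \<Rightarrow> nat option"

text \<open>The "history" part of a node: Gamma, HCr, Nx (None = bottom), BD, BB.\<close>
record pnode =
  gam :: "fml set"
  hcr :: "(fml \<times> fml set) list"
  nx  :: "fml option"
  bd  :: "fml set"
  bb  :: "fml set"

type_synonym cinfo = "pnode \<times> stat \<times> uevt"

definition uev_bot :: uevt where "uev_bot = (\<lambda>_ _. None)"

definition tst :: "fml \<Rightarrow> fml option" where
  "tst f = (if is_nadia f then Some f else None)"

definition bl :: "fml \<Rightarrow> fml set \<Rightarrow> fml set" where
  "bl f G = (if is_nadia f then G else {})"

definition min_bot :: "uevt \<Rightarrow> uevt \<Rightarrow> uevt" where
  "min_bot f g = (\<lambda>x y. case (f x y, g x y) of (Some a, Some b) \<Rightarrow> Some (min a b) | _ \<Rightarrow> None)"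

definition restr :: "fml set \<Rightarrow> uevt \<Rightarrow> uevt" where
  "restr G u = (\<lambda>x y. if x \<in> G then u x y else None)"

definition rule_id :: "pnode \<Rightarrow> cinfo list \<Rightarrow> stat \<Rightarrow> uevt \<Rightarrow> bool" where
  "rule_id p cs s u \<longleftrightarrow> (\<exists>q. Atom q \<in> gam p \<and> Neg (Atom q) \<in> gam p) \<and>
     cs = [] \<and> s = Unsat \<and> u = uev_bot"

definition rule_star2 :: "pnode \<Rightarrow> fml \<Rightarrow> cinfo list \<Rightarrow> stat \<Rightarrow> uevt \<Rightarrow> bool" where
  "rule_star2 p F cs s u \<longleftrightarrow> (\<exists>\<alpha> \<phi>. F = Dia (Star \<alpha>) \<phi>) \<and> F \<in> gam p \<and>
     (nx p = None \<or> nx p = Some F) \<and> F \<in> bd p \<and> cs = [] \<and> s = Barred \<and> u = uev_bot"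

definition lin1 :: "pnode \<Rightarrow> fml \<Rightarrow> pnode \<Rightarrow> cinfo list \<Rightarrow> stat \<Rightarrow> uevt \<Rightarrow> bool" where
  "lin1 p F c cs s u \<longleftrightarrow> nx p = None \<and>
     (\<exists>s1 u1. cs = [(c, s1, u1)] \<and> s = s1 \<and> u = restr (gam p - {F}) u1)"

text \<open>Linear diamond rules (<;>) and (<?>): new formulas N added, key formula K.\<close>
definition dlin :: "pnode \<Rightarrow> fml \<Rightarrow> fml set \<Rightarrow> fml \<Rightarrow> cinfo list \<Rightarrow> stat \<Rightarrow> uevt \<Rightarrow> bool" where
  "dlin p F N K cs s u \<longleftrightarrow> (nx p = None \<or> nx p = Some F) \<and>
     (\<exists>s1 u1. cs = [(p\<lparr>gam := N \<union> (gam p - {F}), nx := tst K, bd := bl K (bd p)\<rparr>, s1, u1)] \<and>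
       s = s1 \<and>
       u = (\<lambda>x y. if x = F then u1 K y else if x \<in> gam p - {F} then u1 x y else None))"

definition branch_stat :: "stat \<Rightarrow> stat \<Rightarrow> stat" where
  "branch_stat s1 s2 = (if s1 = Unsat \<and> s2 = Unsat then Unsat
     else if s1 = Open \<or> s2 = Open then Open else Barred)"

definition branch_uev :: "stat \<Rightarrow> stat \<Rightarrow> uevt \<Rightarrow> uevt \<Rightarrow> uevt" where
  "branch_uev s1 s2 u1' u2' = (if branch_stat s1 s2 \<noteq> Open then uev_bot
     else if s1 = Open \<and> s2 = Open then min_bot u1' u2'
     else if s1 = Open then u1' else u2')"

definition branch :: "pnode \<Rightarrow> pnode \<Rightarrow> (uevt \<Rightarrow> uevt) \<Rightarrow> (uevt \<Rightarrow> uevt)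
     \<Rightarrow> cinfo list \<Rightarrow> stat \<Rightarrow> uevt \<Rightarrow> bool" where
  "branch c1 c2 t1 t2 cs s u \<longleftrightarrow> (\<exists>s1 u1 s2 u2. cs = [(c1, s1, u1), (c2, s2, u2)] \<and>
     s = branch_stat s1 s2 \<and> u = branch_uev s1 s2 (t1 u1) (t2 u2))"

definition prin_rule :: "pnode \<Rightarrow> fml \<Rightarrow> cinfo list \<Rightarrow> stat \<Rightarrow> uevt \<Rightarrow> bool" where
  "prin_rule p F cs s u \<longleftrightarrow> F \<in> gam p \<and> (let G = gam p - {F} in
     (\<exists>a b. F = And a b \<and> lin1 p F (p\<lparr>gam := {a, b} \<union> G\<rparr>) cs s u)
   \<or> (\<exists>a b x. F = Box (Choice a b) x \<and> lin1 p F (p\<lparr>gam := {Box a x, Box b x} \<union> G\<rparr>) cs s u)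
   \<or> (\<exists>a b x. F = Box (Seq a b) x \<and> lin1 p F (p\<lparr>gam := {Box a (Box b x)} \<union> G\<rparr>) cs s u)
   \<or> (\<exists>a x. F = Box (Star a) x \<and>
        lin1 p F (p\<lparr>gam := (if F \<in> bb p then G else {x, Box a F} \<union> G), bb := insert F (bb p)\<rparr>) cs s u)
   \<or> (\<exists>a b x. F = Dia (Seq a b) x \<and> dlin p F {Dia a (Dia b x)} (Dia a (Dia b x)) cs s u)
   \<or> (\<exists>\<psi> x. F = Dia (Test \<psi>) x \<and> dlin p F {\<psi>, x} x cs s u)
   \<or> (\<exists>a b. F = Or a b \<and> nx p = None \<and>
        branch (p\<lparr>gam := {a} \<union> G\<rparr>) (p\<lparr>gam := {b} \<union> G\<rparr>) (restr G) (restr G) cs s u)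
   \<or> (\<exists>\<psi> x. F = Box (Test \<psi>) x \<and> nx p = None \<and>
        branch (p\<lparr>gam := {sim \<psi>} \<union> G\<rparr>) (p\<lparr>gam := {x} \<union> G\<rparr>) (restr G) (restr G) cs s u)
   \<or> (\<exists>a1 a2 x. F = Dia (Choice a1 a2) x \<and> (nx p = None \<or> nx p = Some F) \<and>
        branch (p\<lparr>gam := {Dia a1 x} \<union> G, nx := tst (Dia a1 x), bd := bl (Dia a1 x) (bd p)\<rparr>)
               (p\<lparr>gam := {Dia a2 x} \<union> G, nx := tst (Dia a2 x), bd := bl (Dia a2 x) (bd p)\<rparr>)
               (\<lambda>u1 c1 c2. if c1 = F then u1 (Dia a1 x) c2 else if c1 \<in> G then u1 c1 c2 else None)
               (\<lambda>u2 c1 c2. if c1 = F then u2 (Dia a2 x) c2 else if c1 \<in> G then u2 c1 c2 else None)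
               cs s u)
   \<or> (\<exists>a x. F = Dia (Star a) x \<and> (nx p = None \<or> nx p = Some F) \<and> F \<notin> bd p \<and>
        branch (p\<lparr>gam := {x} \<union> G, nx := tst x, bd := bl x (insert F (bd p))\<rparr>)
               (p\<lparr>gam := {Dia a F} \<union> G, nx := tst (Dia a F), bd := bl (Dia a F) (insert F (bd p))\<rparr>)
               (\<lambda>u1 c1 c2. if c1 = F \<and> c2 = F then None else if c1 = F then u1 x c2
                           else if c1 \<in> G then u1 c1 c2 else None)
               (\<lambda>u2 c1 c2. if c1 = F then u2 (Dia a F) c2 else if c1 \<in> G then u2 c1 c2 else None)
               cs s u)
   \<or> rule_star2 p F cs s u)"

text \<open>The diamonds <a>phi of the premise are split into new ones
  (whose HCr-entry is not in HCr; listed without repetition as ds, children in the same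
  order) and old ones (whose entry is HCr[j], positions counted from 1).\<close>
definition rule_ex :: "pnode \<Rightarrow> cinfo list \<Rightarrow> stat \<Rightarrow> uevt \<Rightarrow> bool" where
  "rule_ex p cs s u \<longleftrightarrow>
     (\<forall>f\<in>gam p. is_atdia f \<or> is_atbox f \<or> is_lit f) \<and>
     \<not> (\<exists>q. Atom q \<in> gam p \<and> Neg (Atom q) \<in> gam p) \<and>
     (let Del = (\<lambda>a. {\<psi>. Box (AP a) \<psi> \<in> gam p});
          entry = (\<lambda>a \<phi>. (\<phi>, insert \<phi> (Del a)));
          newd = {(a, \<phi>). Dia (AP a) \<phi> \<in> gam p \<and> entry a \<phi> \<notin> set (hcr p)};
          oldd = {(a, \<phi>). Dia (AP a) \<phi> \<in> gam p \<and> entry a \<phi> \<in> set (hcr p)};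
          child = (\<lambda>(a, \<phi>). \<lparr>gam = insert \<phi> (Del a), hcr = hcr p @ [entry a \<phi>],
                             nx = tst \<phi>, bd = {}, bb = {}\<rparr>)
      in \<exists>ds. distinct ds \<and> set ds = newd \<and> length cs = length ds \<and>
           (\<forall>i<length ds. fst (cs!i) = child (ds!i)) \<and>
           s = (if (\<exists>i<length ds. fst (snd (cs!i)) \<noteq> Open) \<or>
                   (\<exists>i<length ds. \<exists>\<psi> k. is_stardia \<psi> \<and> snd (ds!i) \<in> ppre \<psi> \<and>
                        snd (snd (cs!i)) (snd (ds!i)) \<psi> = Some k \<and> k > length (hcr p))
                then Unsat else Open) \<and>
           u = (\<lambda>\<chi>1 \<chi>2. if s = Open \<and> is_stardia \<chi>2 \<and> \<chi>1 \<in> ppre \<chi>2 then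
                  (case atdia_parts \<chi>1 of
                     Some (a, \<phi>) \<Rightarrow>
                       (case map_of (zip ds cs) (a, \<phi>) of
                          Some (_, _, ui) \<Rightarrow> ui \<phi> \<chi>2
                        | None \<Rightarrow> if (a, \<phi>) \<in> oldd then
                             Some (LEAST j. 0 < j \<and> j \<le> length (hcr p) \<and> hcr p ! (j - 1) = entry a \<phi>)
                           else None)
                   | None \<Rightarrow> None)
                else None))"

definition rule_step :: "pnode \<Rightarrow> cinfo list \<Rightarrow> stat \<Rightarrow> uevt \<Rightarrow> bool" where
  "rule_step p cs s u \<longleftrightarrow> rule_id p cs s u \<or> (\<exists>F. prin_rule p F cs s u) \<or> rule_ex p cs s u"

datatype tab = Tab pnode stat uevt "tab list"

fun tnode :: "tab \<Rightarrow> pnode" where "tnode (Tab p s u cs) = p"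
fun tstat :: "tab \<Rightarrow> stat" where "tstat (Tab p s u cs) = s"
fun tinfo :: "tab \<Rightarrow> cinfo" where "tinfo (Tab p s u cs) = (p, s, u)"

text \<open>A (finite) tableau in which every node, leaves included, is the premise of a rule
  application whose conclusions are exactly its children; hence no leaf admits a further
  rule application, i.e. the tableau is expanded.\<close>
inductive expanded_tableau :: "tab \<Rightarrow> bool" where
  "rule_step p (map tinfo cs) s u \<Longrightarrow> (\<forall>c\<in>set cs. expanded_tableau c) \<Longrightarrow>
   expanded_tableau (Tab p s u cs)"

end

theory Submission
  imports Defs "HOL-Library.Sublist" "HOL-Library.Countable"
begin

fun kids :: "tab \<Rightarrow> tab list" where "kids (Tab p s u cs) = cs"
fun tuev :: "tab \<Rightarrow> uevt" where "tuev (Tab p s u cs) = u"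

lemma tinfo_eq: "tinfo t = (tnode t, tstat t, tuev t)"
  by (cases t) auto

fun subt :: "tab \<Rightarrow> nat list \<Rightarrow> tab" where
  "subt t [] = t"
| "subt t (i # is) = subt (kids t ! i) is"

fun vpos :: "tab \<Rightarrow> nat list \<Rightarrow> bool" where
  "vpos t [] = True"
| "vpos t (i # is) = (i < length (kids t) \<and> vpos (kids t ! i) is)"

lemma subt_snoc: "subt t (is @ [i]) = kids (subt t is) ! i"
  by (induction "is" arbitrary: t) auto

lemma vpos_snoc: "vpos t (is @ [i]) \<longleftrightarrow> vpos t is \<and> i < length (kids (subt t is))"
  by (induction "is" arbitrary: t) auto

lemma vpos_take: "vpos t is \<Longrightarrow> vpos t (take n is)"
  by (induction "is" arbitrary: t n) (auto simp: take_Cons split: nat.splits)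

lemma take_Suc_snoc: "n < length is \<Longrightarrow> take (Suc n) is = take n is @ [is ! n]"
  by (simp add: take_Suc_conv_app_nth)

lemma exp_kids: "expanded_tableau t \<Longrightarrow> c \<in> set (kids t) \<Longrightarrow> expanded_tableau c"
  by (cases t) (auto elim: expanded_tableau.cases)

lemma exp_rule: "expanded_tableau t \<Longrightarrow> rule_step (tnode t) (map tinfo (kids t)) (tstat t) (tuev t)"
  by (cases t) (auto elim: expanded_tableau.cases)

lemma exp_subt: "expanded_tableau t \<Longrightarrow> vpos t is \<Longrightarrow> expanded_tableau (subt t is)"
  by (induction "is" arbitrary: t) (auto intro: exp_kids nth_mem)

lemma ppre_dia: "f \<in> ppre g \<Longrightarrow> f = g \<or> (\<exists>a h. f = Dia a h \<and> h \<in> ppre g)"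
  by (induction rule: ppre.induct) auto

lemma ppre_size: "f \<in> ppre g \<Longrightarrow> size g \<le> size f"
  by (induction rule: ppre.induct) auto

lemma ppre_trans: "f \<in> ppre g \<Longrightarrow> g \<in> ppre h \<Longrightarrow> f \<in> ppre h"
  by (induction rule: ppre.induct) (auto intro: ppre.intros)

lemma target_notin: "\<psi> \<notin> ppre (Dia b \<psi>)"
  using ppre_size by fastforce

lemma ppre_self: "f \<in> ppre f" by (rule ppre_base)

lemma leads_ppre:
  assumes "F \<in> ppre (Dia (Star \<alpha>) \<psi>)" "K \<in> leads F"
  shows "K \<in> ppre (Dia (Star \<alpha>) \<psi>) \<or> (F = Dia (Star \<alpha>) \<psi> \<and> K = \<psi>)"
proof (cases "F = Dia (Star \<alpha>) \<psi>")
  case True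
  then show ?thesis using assms by (auto intro: ppre.intros)
next
  case False
  then obtain a h where F: "F = Dia a h" and h: "h \<in> ppre (Dia (Star \<alpha>) \<psi>)"
    using ppre_dia[OF assms(1)] by auto
  show ?thesis using assms(2) h unfolding F
    by (cases a) (auto intro: ppre.intros)
qed

lemma ppre_sub: "f \<in> ppre (Dia b \<psi>) \<Longrightarrow> f \<in> ppre \<psi>"
  using ppre_trans ppre.intros by blast

lemma ppre_dia_inv: "Dia a h \<in> ppre g \<Longrightarrow> Dia a h \<noteq> g \<Longrightarrow> h \<in> ppre g"
  using ppre_dia by fastforce

lemma less2: "i < Suc (Suc 0) \<Longrightarrow> i = 0 \<or> i = 1" by auto

lemma prin_child:
  assumes "prin_rule p F cs s u" "i < length cs"
  shows "F \<in> gam p \<and> hcr (fst (cs!i)) = hcr p \<and> gam p - {F} \<subseteq> gam (fst (cs!i)) \<and>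
   \<not> is_atdia F \<and> \<not> is_atbox F \<and> \<not> is_lit F \<and>
   (bb (fst (cs!i)) = bb p \<or> (\<exists>a x. F = Box (Star a) x \<and> bb (fst(cs!i)) = insert F (bb p))) \<and>
   (alpha_comps F \<subseteq> gam (fst (cs!i)) \<or> (\<exists>a x. F = Box (Star a) x \<and> F \<in> bb p)) \<and>
   (\<forall>b1 b2. beta_comps F = Some (b1,b2) \<longrightarrow> b1 \<in> gam (fst (cs!i)) \<or> b2 \<in> gam (fst (cs!i))) \<and>
   ((\<exists>a x. F = Dia a x) \<longrightarrow> (\<exists>K \<in> leads F. K \<in> gam (fst (cs!i))))"
  using assms unfolding prin_rule_def Let_def
  apply (elim conjE disjE exE)
  by (auto simp: lin1_def dlin_def branch_def rule_star2_def is_atdia_def is_atbox_def is_lit_def dest!: less2 split: if_splits)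

definition Del :: "pnode \<Rightarrow> nat \<Rightarrow> fml set" where
  "Del p a = {\<psi>. Box (AP a) \<psi> \<in> gam p}"
definition entry :: "pnode \<Rightarrow> nat \<Rightarrow> fml \<Rightarrow> fml \<times> fml set" where
  "entry p a \<phi> = (\<phi>, insert \<phi> (Del p a))"

definition atomic_gam :: "pnode \<Rightarrow> bool" where
  "atomic_gam p \<longleftrightarrow> (\<forall>f\<in>gam p. is_atdia f \<or> is_atbox f \<or> is_lit f)"

lemma rule_ex_unf:
  assumes "rule_ex p cs s u"
  obtains ds where "atomic_gam p" "\<not> (\<exists>q. Atom q \<in> gam p \<and> Neg (Atom q) \<in> gam p)"
    "distinct ds" "set ds = {(a, \<phi>). Dia (AP a) \<phi> \<in> gam p \<and> entry p a \<phi> \<notin> set (hcr p)}"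
    "length cs = length ds"
    "\<forall>i<length ds. fst (cs!i) = (case ds!i of (a, \<phi>) \<Rightarrow> \<lparr>gam = insert \<phi> (Del p a), hcr = hcr p @ [entry p a \<phi>],
                             nx = tst \<phi>, bd = {}, bb = {}\<rparr>)"
    "s = (if (\<exists>i<length ds. fst (snd (cs!i)) \<noteq> Open) \<or>
                   (\<exists>i<length ds. \<exists>\<psi> k. is_stardia \<psi> \<and> snd (ds!i) \<in> ppre \<psi> \<and>
                        snd (snd (cs!i)) (snd (ds!i)) \<psi> = Some k \<and> k > length (hcr p))
                then Unsat else Open)"
    "u = (\<lambda>\<chi>1 \<chi>2. if s = Open \<and> is_stardia \<chi>2 \<and> \<chi>1 \<in> ppre \<chi>2 then
                  (case atdia_parts \<chi>1 of
                     Some (a, \<phi>) \<Rightarrow>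
                       (case map_of (zip ds cs) (a, \<phi>) of
                          Some (_, _, ui) \<Rightarrow> ui \<phi> \<chi>2
                        | None \<Rightarrow> if (a, \<phi>) \<in> {(a, \<phi>). Dia (AP a) \<phi> \<in> gam p \<and> (\<phi>, insert \<phi> {\<psi>. Box (AP a) \<psi> \<in> gam p}) \<in> set (hcr p)} then
                             Some (LEAST j. 0 < j \<and> j \<le> length (hcr p) \<and> hcr p ! (j - 1) = (\<phi>, insert \<phi> {\<psi>. Box (AP a) \<psi> \<in> gam p}))
                           else None)
                   | None \<Rightarrow> None)
                else None)"
  using assms unfolding rule_ex_def Let_def
  apply (elim conjE exE)
  apply (rule that)
  apply (simp_all add: atomic_gam_def entry_def Del_def)
  done

lemma ex_child:
  assumes "rule_ex p cs s u" "i < length cs"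
  shows "\<exists>a \<phi>. Dia (AP a) \<phi> \<in> gam p \<and> gam (fst (cs!i)) = insert \<phi> (Del p a) \<and>
     hcr (fst (cs!i)) = hcr p @ [entry p a \<phi>] \<and> bb (fst (cs!i)) = {} \<and>
     (s = Open \<longrightarrow> fst (snd (cs!i)) = Open \<and>
        (\<forall>\<psi> k. is_stardia \<psi> \<and> \<phi> \<in> ppre \<psi> \<and> snd (snd (cs!i)) \<phi> \<psi> = Some k \<longrightarrow> k \<le> length (hcr p)))"
proof -
  obtain ds where d0: "atomic_gam p" "\<not> (\<exists>q. Atom q \<in> gam p \<and> Neg (Atom q) \<in> gam p)" and d: "distinct ds" "set ds = {(a, \<phi>). Dia (AP a) \<phi> \<in> gam p \<and> entry p a \<phi> \<notin> set (hcr p)}"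
    "length cs = length ds"
    "\<forall>i<length ds. fst (cs!i) = (case ds!i of (a, \<phi>) \<Rightarrow> \<lparr>gam = insert \<phi> (Del p a), hcr = hcr p @ [entry p a \<phi>],
                             nx = tst \<phi>, bd = {}, bb = {}\<rparr>)"
    "s = (if (\<exists>i<length ds. fst (snd (cs!i)) \<noteq> Open) \<or>
                   (\<exists>i<length ds. \<exists>\<psi> k. is_stardia \<psi> \<and> snd (ds!i) \<in> ppre \<psi> \<and>
                        snd (snd (cs!i)) (snd (ds!i)) \<psi> = Some k \<and> k > length (hcr p))
                then Unsat else Open)"
    and du: "u = (\<lambda>\<chi>1 \<chi>2. if s = Open \<and> is_stardia \<chi>2 \<and> \<chi>1 \<in> ppre \<chi>2 then
                  (case atdia_parts \<chi>1 of
                     Some (a, \<phi>) \<Rightarrow>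
                       (case map_of (zip ds cs) (a, \<phi>) of
                          Some (_, _, ui) \<Rightarrow> ui \<phi> \<chi>2
                        | None \<Rightarrow> if (a, \<phi>) \<in> {(a, \<phi>). Dia (AP a) \<phi> \<in> gam p \<and> (\<phi>, insert \<phi> {\<psi>. Box (AP a) \<psi> \<in> gam p}) \<in> set (hcr p)} then
                             Some (LEAST j. 0 < j \<and> j \<le> length (hcr p) \<and> hcr p ! (j - 1) = (\<phi>, insert \<phi> {\<psi>. Box (AP a) \<psi> \<in> gam p}))
                           else None)
                   | None \<Rightarrow> None)
                else None)"
    by (rule rule_ex_unf[OF assms(1)])
  obtain a \<phi> where ai: "ds ! i = (a, \<phi>)" by fastforce
  have "(a, \<phi>) \<in> set ds" using ai assms(2) d(3) nth_mem by metis
  then have "Dia (AP a) \<phi> \<in> gam p" using d(2) by auto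
  moreover have "fst (cs!i) = \<lparr>gam = insert \<phi> (Del p a), hcr = hcr p @ [entry p a \<phi>],
                             nx = tst \<phi>, bd = {}, bb = {}\<rparr>" using d(3,4) ai assms(2)
    by (metis (no_types, lifting) case_prod_conv)
  moreover have "s = Open \<longrightarrow> fst (snd (cs!i)) = Open \<and>
        (\<forall>\<psi> k. is_stardia \<psi> \<and> \<phi> \<in> ppre \<psi> \<and> snd (snd (cs!i)) \<phi> \<psi> = Some k \<longrightarrow> k \<le> length (hcr p))"
  proof
    assume "s = Open"
    then have nc: "\<not> ((\<exists>i<length ds. fst (snd (cs!i)) \<noteq> Open) \<or>
                   (\<exists>i<length ds. \<exists>\<psi> k. is_stardia \<psi> \<and> snd (ds!i) \<in> ppre \<psi> \<and>
                        snd (snd (cs!i)) (snd (ds!i)) \<psi> = Some k \<and> k > length (hcr p)))"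
      using d(5) by (metis stat.distinct(1))
    have ii: "i < length ds" using assms(2) d(3) by simp
    show "fst (snd (cs!i)) = Open \<and>
        (\<forall>\<psi> k. is_stardia \<psi> \<and> \<phi> \<in> ppre \<psi> \<and> snd (snd (cs!i)) \<phi> \<psi> = Some k \<longrightarrow> k \<le> length (hcr p))"
      using nc ii ai by (metis not_le snd_conv)
  qed
  ultimately show ?thesis by auto
qed


lemma ex_dia:
  assumes "rule_ex p cs s u" "s = Open" "Dia (AP a) \<phi> \<in> gam p"
  shows "(\<exists>i<length cs. gam (fst (cs!i)) = insert \<phi> (Del p a) \<and>
     hcr (fst (cs!i)) = hcr p @ [entry p a \<phi>] \<and> fst (snd (cs!i)) = Open \<and>
     (\<forall>\<chi>2. is_stardia \<chi>2 \<and> Dia (AP a) \<phi> \<in> ppre \<chi>2 \<longrightarrow> u (Dia (AP a) \<phi>) \<chi>2 = snd (snd (cs!i)) \<phi> \<chi>2))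
   \<or> (\<exists>k. 0 < k \<and> k \<le> length (hcr p) \<and> hcr p ! (k - 1) = entry p a \<phi> \<and>
     (\<forall>\<chi>2. is_stardia \<chi>2 \<and> Dia (AP a) \<phi> \<in> ppre \<chi>2 \<longrightarrow> u (Dia (AP a) \<phi>) \<chi>2 = Some k))"
proof -
  obtain ds where d0: "atomic_gam p" "\<not> (\<exists>q. Atom q \<in> gam p \<and> Neg (Atom q) \<in> gam p)" and d: "distinct ds" "set ds = {(a, \<phi>). Dia (AP a) \<phi> \<in> gam p \<and> entry p a \<phi> \<notin> set (hcr p)}"
    "length cs = length ds"
    "\<forall>i<length ds. fst (cs!i) = (case ds!i of (a, \<phi>) \<Rightarrow> \<lparr>gam = insert \<phi> (Del p a), hcr = hcr p @ [entry p a \<phi>],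
                             nx = tst \<phi>, bd = {}, bb = {}\<rparr>)"
    "s = (if (\<exists>i<length ds. fst (snd (cs!i)) \<noteq> Open) \<or>
                   (\<exists>i<length ds. \<exists>\<psi> k. is_stardia \<psi> \<and> snd (ds!i) \<in> ppre \<psi> \<and>
                        snd (snd (cs!i)) (snd (ds!i)) \<psi> = Some k \<and> k > length (hcr p))
                then Unsat else Open)"
    and du: "u = (\<lambda>\<chi>1 \<chi>2. if s = Open \<and> is_stardia \<chi>2 \<and> \<chi>1 \<in> ppre \<chi>2 then
                  (case atdia_parts \<chi>1 of
                     Some (a, \<phi>) \<Rightarrow>
                       (case map_of (zip ds cs) (a, \<phi>) of
                          Some (_, _, ui) \<Rightarrow> ui \<phi> \<chi>2
                        | None \<Rightarrow> if (a, \<phi>) \<in> {(a, \<phi>). Dia (AP a) \<phi> \<in> gam p \<and> (\<phi>, insert \<phi> {\<psi>. Box (AP a) \<psi> \<in> gam p}) \<in> set (hcr p)} then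
                             Some (LEAST j. 0 < j \<and> j \<le> length (hcr p) \<and> hcr p ! (j - 1) = (\<phi>, insert \<phi> {\<psi>. Box (AP a) \<psi> \<in> gam p}))
                           else None)
                   | None \<Rightarrow> None)
                else None)"
    by (rule rule_ex_unf[OF assms(1)])
  show ?thesis
  proof (cases "entry p a \<phi> \<in> set (hcr p)")
    case False
    then have "(a, \<phi>) \<in> set ds" using d(2) assms(3) by auto
    then obtain i where i: "i < length ds" "ds ! i = (a, \<phi>)" by (metis in_set_conv_nth)
    have mo: "map_of (zip ds cs) (a, \<phi>) = Some (cs ! i)"
      using map_of_zip_nth[of ds cs i] d(1,3) i by simp
    have "gam (fst (cs!i)) = insert \<phi> (Del p a) \<and> hcr (fst (cs!i)) = hcr p @ [entry p a \<phi>]"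
      using d(4) i by auto
    moreover have "fst (snd (cs!i)) = Open" using d(3,5) i assms(2) by (auto split: if_splits)
    moreover have "\<forall>\<chi>2. is_stardia \<chi>2 \<and> Dia (AP a) \<phi> \<in> ppre \<chi>2 \<longrightarrow> u (Dia (AP a) \<phi>) \<chi>2 = snd (snd (cs!i)) \<phi> \<chi>2"
      using du mo assms(2) by (auto split: prod.splits)
    ultimately show ?thesis using i d(3) by auto
  next
    case True
    then have nd: "(a, \<phi>) \<notin> set ds" using d(2) by auto
    then have mo: "map_of (zip ds cs) (a, \<phi>) = None" using d(3) by simp
    obtain j where j: "j < length (hcr p)" "hcr p ! j = entry p a \<phi>" using True by (metis in_set_conv_nth)
    define k where "k = (LEAST j. 0 < j \<and> j \<le> length (hcr p) \<and> hcr p ! (j - 1) = entry p a \<phi>)"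
    have ex: "0 < Suc j \<and> Suc j \<le> length (hcr p) \<and> hcr p ! (Suc j - 1) = entry p a \<phi>" using j by auto
    have kp: "0 < k \<and> k \<le> length (hcr p) \<and> hcr p ! (k - 1) = entry p a \<phi>"
      unfolding k_def by (rule LeastI[of _ "Suc j"], rule ex)
    have "\<forall>\<chi>2. is_stardia \<chi>2 \<and> Dia (AP a) \<phi> \<in> ppre \<chi>2 \<longrightarrow> u (Dia (AP a) \<phi>) \<chi>2 = Some k"
      using du mo assms(2,3) True unfolding k_def by (auto simp: entry_def Del_def)
    then show ?thesis using kp by blast
  qed
qed


lemma prin_open:
  assumes "prin_rule p F cs s u"
  shows "F \<in> gam p \<and> \<not> is_atdia F \<and> \<not> is_atbox F \<and> \<not> is_lit F \<and>
    (s = Open \<longrightarrow> (\<exists>i<length cs. fst (snd (cs!i)) = Open))"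
  using assms unfolding prin_rule_def Let_def
  by (auto simp: lin1_def dlin_def branch_def rule_star2_def is_atdia_def is_atbox_def is_lit_def
      branch_stat_def split: if_splits)

fun bnd :: "nat option \<Rightarrow> nat" where
  "bnd None = 0" | "bnd (Some k) = k"

lemma min_bot_bnd: "bnd (f x y) \<le> bnd (min_bot f g x y) \<or> bnd (g x y) \<le> bnd (min_bot f g x y)"
  unfolding min_bot_def by (cases "f x y"; cases "g x y") auto

lemma branch_pick:
  assumes "branch c1 c2 t1 t2 cs s u" "s = Open"
  shows "\<exists>s1 u1 s2 u2. cs = [(c1, s1, u1), (c2, s2, u2)] \<and>
    ((s1 = Open \<and> bnd (t1 u1 x y) \<le> bnd (u x y)) \<or> (s2 = Open \<and> bnd (t2 u2 x y) \<le> bnd (u x y)))"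
proof -
  obtain s1 u1 s2 u2 where b: "cs = [(c1, s1, u1), (c2, s2, u2)]" "s = branch_stat s1 s2"
    "u = branch_uev s1 s2 (t1 u1) (t2 u2)" using assms(1) unfolding branch_def by blast
  have "(s1 = Open \<and> bnd (t1 u1 x y) \<le> bnd (u x y)) \<or> (s2 = Open \<and> bnd (t2 u2 x y) \<le> bnd (u x y))"
  proof (cases "s1 = Open \<and> s2 = Open")
    case True
    then have "u = min_bot (t1 u1) (t2 u2)" using b(3) unfolding branch_uev_def branch_stat_def by simp
    then show ?thesis using min_bot_bnd True by metis
  next
    case False
    then show ?thesis using b(2,3) assms(2) unfolding branch_uev_def branch_stat_def
      by (auto split: if_splits)
  qed
  then show ?thesis using b(1) by blast
qed

definition goodkid :: "cinfo list \<Rightarrow> fml \<Rightarrow> fml \<Rightarrow> fml \<Rightarrow> uevt \<Rightarrow> fml \<Rightarrow> bool" where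
  "goodkid cs F f \<psi> u \<chi>2 \<longleftrightarrow> (\<exists>i \<chi>'. i < length cs \<and> fst (snd (cs!i)) = Open \<and> \<chi>' \<in> gam (fst (cs!i)) \<and>
     (\<chi>' = f \<or> (f = F \<and> \<chi>' \<in> leads F)) \<and>
     (\<chi>' = \<psi> \<or> bnd (snd (snd (cs!i)) \<chi>' \<chi>2) \<le> bnd (u f \<chi>2)))"

lemma gk_lin1:
  assumes "lin1 p F c cs s u" "s = Open" "f \<in> gam p" "f \<noteq> F" "gam p - {F} \<subseteq> gam c"
  shows "goodkid cs F f \<psi> u \<chi>2"
proof -
  obtain s1 u1 where l: "cs = [(c, s1, u1)]" "s = s1" "u = restr (gam p - {F}) u1"
    using assms(1) unfolding lin1_def by blast
  show ?thesis unfolding goodkid_def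
    by (rule exI[of _ 0], rule exI[of _ f]) (use l assms in \<open>auto simp: restr_def\<close>)
qed

lemma gk_dlin:
  assumes "dlin p F N K cs s u" "s = Open" "f \<in> gam p" "K \<in> N" "K \<in> leads F"
  shows "goodkid cs F f \<psi> u \<chi>2"
proof -
  obtain s1 u1 where l: "cs = [(p\<lparr>gam := N \<union> (gam p - {F}), nx := tst K, bd := bl K (bd p)\<rparr>, s1, u1)]"
    "s = s1" "u = (\<lambda>x y. if x = F then u1 K y else if x \<in> gam p - {F} then u1 x y else None)"
    using assms(1) unfolding dlin_def by blast
  show ?thesis
  proof (cases "f = F")
    case True
    show ?thesis unfolding goodkid_def
      by (rule exI[of _ 0], rule exI[of _ K]) (use l assms True in auto)
  next
    case False
    show ?thesis unfolding goodkid_def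
      by (rule exI[of _ 0], rule exI[of _ f]) (use l assms False in auto)
  qed
qed

lemma gk_branch_restr:
  assumes "branch c1 c2 (restr G) (restr G) cs s u" "s = Open" "f \<in> G" "G \<subseteq> gam c1" "G \<subseteq> gam c2"
  shows "goodkid cs F f \<psi> u \<chi>2"
proof -
  obtain s1 u1 s2 u2 where b: "cs = [(c1, s1, u1), (c2, s2, u2)]"
    "(s1 = Open \<and> bnd (restr G u1 f \<chi>2) \<le> bnd (u f \<chi>2)) \<or> (s2 = Open \<and> bnd (restr G u2 f \<chi>2) \<le> bnd (u f \<chi>2))"
    using branch_pick[OF assms(1,2), of f \<chi>2] by blast
  from b(2) show ?thesis
  proof
    assume h: "s1 = Open \<and> bnd (restr G u1 f \<chi>2) \<le> bnd (u f \<chi>2)"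
    show ?thesis unfolding goodkid_def
      by (rule exI[of _ 0], rule exI[of _ f]) (use b(1) h assms in \<open>auto simp: restr_def\<close>)
  next
    assume h: "s2 = Open \<and> bnd (restr G u2 f \<chi>2) \<le> bnd (u f \<chi>2)"
    show ?thesis unfolding goodkid_def
      by (rule exI[of _ 1], rule exI[of _ f]) (use b(1) h assms in \<open>auto simp: restr_def\<close>)
  qed
qed

lemma gk_branch_dia:
  assumes "branch c1 c2 t1 t2 cs s u" "s = Open" "f \<in> gam p"
    "G = gam p - {F}" "G \<subseteq> gam c1" "G \<subseteq> gam c2" "K1 \<in> gam c1" "K2 \<in> gam c2"
    "K1 \<in> leads F" "K2 \<in> leads F"
    "\<And>uu. f \<noteq> F \<Longrightarrow> t1 uu f \<chi>2 = uu f \<chi>2" "\<And>uu. f \<noteq> F \<Longrightarrow> t2 uu f \<chi>2 = uu f \<chi>2"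
    "\<And>uu. f = F \<Longrightarrow> K1 = \<psi> \<or> t1 uu f \<chi>2 = uu K1 \<chi>2" "\<And>uu. f = F \<Longrightarrow> t2 uu f \<chi>2 = uu K2 \<chi>2"
  shows "goodkid cs F f \<psi> u \<chi>2"
proof -
  obtain s1 u1 s2 u2 where b: "cs = [(c1, s1, u1), (c2, s2, u2)]"
    "(s1 = Open \<and> bnd (t1 u1 f \<chi>2) \<le> bnd (u f \<chi>2)) \<or> (s2 = Open \<and> bnd (t2 u2 f \<chi>2) \<le> bnd (u f \<chi>2))"
    using branch_pick[OF assms(1,2), of f \<chi>2] by blast
  show ?thesis
  proof (cases "f = F")
    case False
    then have fG: "f \<in> G" using assms(3,4) by blast
    from b(2) show ?thesis
    proof
      assume h: "s1 = Open \<and> bnd (t1 u1 f \<chi>2) \<le> bnd (u f \<chi>2)"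
      show ?thesis unfolding goodkid_def
        by (rule exI[of _ 0], rule exI[of _ f]) (use b(1) h fG assms(5,11) False in auto)
    next
      assume h: "s2 = Open \<and> bnd (t2 u2 f \<chi>2) \<le> bnd (u f \<chi>2)"
      show ?thesis unfolding goodkid_def
        by (rule exI[of _ 1], rule exI[of _ f]) (use b(1) h fG assms(6,12) False in auto)
    qed
  next
    case True
    from b(2) show ?thesis
    proof
      assume h: "s1 = Open \<and> bnd (t1 u1 f \<chi>2) \<le> bnd (u f \<chi>2)"
      show ?thesis unfolding goodkid_def
        by (rule exI[of _ 0], rule exI[of _ K1]) (use b(1) h assms(7,9) assms(13)[OF True, of u1] True in auto)
    next
      assume h: "s2 = Open \<and> bnd (t2 u2 f \<chi>2) \<le> bnd (u f \<chi>2)"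
      show ?thesis unfolding goodkid_def
        by (rule exI[of _ 1], rule exI[of _ K2]) (use b(1) h assms(8,10) assms(14)[OF True, of u2] True in auto)
    qed
  qed
qed

lemma ppre_isdia: "f \<in> ppre (Dia b g) \<Longrightarrow> \<exists>a h. f = Dia a h"
  using ppre_dia by blast

lemma prin_goodkid:
  assumes "prin_rule p F cs s u" "s = Open" "f \<in> gam p" "f \<in> ppre (Dia (Star \<alpha>) \<psi>)"
  shows "goodkid cs F f \<psi> u (Dia (Star \<alpha>) \<psi>)"
proof -
  obtain a0 h0 where fd: "f = Dia a0 h0" using ppre_isdia[OF assms(4)] by blast
  have Fg: "F \<in> gam p" using assms(1) unfolding prin_rule_def by blast
  define G where "G = gam p - {F}"
  have D: "(\<exists>a b. F = And a b \<and> lin1 p F (p\<lparr>gam := {a, b} \<union> G\<rparr>) cs s u)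
   \<or> (\<exists>a b x. F = Box (Choice a b) x \<and> lin1 p F (p\<lparr>gam := {Box a x, Box b x} \<union> G\<rparr>) cs s u)
   \<or> (\<exists>a b x. F = Box (Seq a b) x \<and> lin1 p F (p\<lparr>gam := {Box a (Box b x)} \<union> G\<rparr>) cs s u)
   \<or> (\<exists>a x. F = Box (Star a) x \<and>
        lin1 p F (p\<lparr>gam := (if F \<in> bb p then G else {x, Box a F} \<union> G), bb := insert F (bb p)\<rparr>) cs s u)
   \<or> (\<exists>a b x. F = Dia (Seq a b) x \<and> dlin p F {Dia a (Dia b x)} (Dia a (Dia b x)) cs s u)
   \<or> (\<exists>\<psi> x. F = Dia (Test \<psi>) x \<and> dlin p F {\<psi>, x} x cs s u)
   \<or> (\<exists>a b. F = Or a b \<and> nx p = None \<and>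
        branch (p\<lparr>gam := {a} \<union> G\<rparr>) (p\<lparr>gam := {b} \<union> G\<rparr>) (restr G) (restr G) cs s u)
   \<or> (\<exists>\<psi> x. F = Box (Test \<psi>) x \<and> nx p = None \<and>
        branch (p\<lparr>gam := {sim \<psi>} \<union> G\<rparr>) (p\<lparr>gam := {x} \<union> G\<rparr>) (restr G) (restr G) cs s u)
   \<or> (\<exists>a1 a2 x. F = Dia (Choice a1 a2) x \<and> (nx p = None \<or> nx p = Some F) \<and>
        branch (p\<lparr>gam := {Dia a1 x} \<union> G, nx := tst (Dia a1 x), bd := bl (Dia a1 x) (bd p)\<rparr>)
               (p\<lparr>gam := {Dia a2 x} \<union> G, nx := tst (Dia a2 x), bd := bl (Dia a2 x) (bd p)\<rparr>)
               (\<lambda>u1 c1 c2. if c1 = F then u1 (Dia a1 x) c2 else if c1 \<in> G then u1 c1 c2 else None)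
               (\<lambda>u2 c1 c2. if c1 = F then u2 (Dia a2 x) c2 else if c1 \<in> G then u2 c1 c2 else None)
               cs s u)
   \<or> (\<exists>a x. F = Dia (Star a) x \<and> (nx p = None \<or> nx p = Some F) \<and> F \<notin> bd p \<and>
        branch (p\<lparr>gam := {x} \<union> G, nx := tst x, bd := bl x (insert F (bd p))\<rparr>)
               (p\<lparr>gam := {Dia a F} \<union> G, nx := tst (Dia a F), bd := bl (Dia a F) (insert F (bd p))\<rparr>)
               (\<lambda>u1 c1 c2. if c1 = F \<and> c2 = F then None else if c1 = F then u1 x c2
                           else if c1 \<in> G then u1 c1 c2 else None)
               (\<lambda>u2 c1 c2. if c1 = F then u2 (Dia a F) c2 else if c1 \<in> G then u2 c1 c2 else None)
               cs s u)
   \<or> rule_star2 p F cs s u"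
    using assms(1) unfolding prin_rule_def Let_def G_def by blast
  have fG: "f \<noteq> F \<Longrightarrow> f \<in> G" using assms(3) unfolding G_def by blast
  from D show ?thesis
  proof (elim disjE)
    assume "\<exists>a b. F = And a b \<and> lin1 p F (p\<lparr>gam := {a, b} \<union> G\<rparr>) cs s u"
    then obtain a b where "F = And a b" "lin1 p F (p\<lparr>gam := {a, b} \<union> G\<rparr>) cs s u" by blast
    then show ?thesis using fd by (intro gk_lin1[OF _ assms(2,3)]) (auto simp: G_def split: if_splits)
  next
    assume "\<exists>a b x. F = Box (Choice a b) x \<and> lin1 p F (p\<lparr>gam := {Box a x, Box b x} \<union> G\<rparr>) cs s u"
    then obtain a b x where "F = Box (Choice a b) x" "lin1 p F (p\<lparr>gam := {Box a x, Box b x} \<union> G\<rparr>) cs s u" by blast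
    then show ?thesis using fd by (intro gk_lin1[OF _ assms(2,3)]) (auto simp: G_def split: if_splits)
  next
    assume "\<exists>a b x. F = Box (Seq a b) x \<and> lin1 p F (p\<lparr>gam := {Box a (Box b x)} \<union> G\<rparr>) cs s u"
    then obtain a b x where "F = Box (Seq a b) x" "lin1 p F (p\<lparr>gam := {Box a (Box b x)} \<union> G\<rparr>) cs s u" by blast
    then show ?thesis using fd by (intro gk_lin1[OF _ assms(2,3)]) (auto simp: G_def split: if_splits)
  next
    assume "\<exists>a x. F = Box (Star a) x \<and>
        lin1 p F (p\<lparr>gam := (if F \<in> bb p then G else {x, Box a F} \<union> G), bb := insert F (bb p)\<rparr>) cs s u"
    then obtain a x where "F = Box (Star a) x"
      "lin1 p F (p\<lparr>gam := (if F \<in> bb p then G else {x, Box a F} \<union> G), bb := insert F (bb p)\<rparr>) cs s u" by blast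
    then show ?thesis using fd by (intro gk_lin1[OF _ assms(2,3)]) (auto simp: G_def split: if_splits)
  next
    assume "\<exists>a b x. F = Dia (Seq a b) x \<and> dlin p F {Dia a (Dia b x)} (Dia a (Dia b x)) cs s u"
    then obtain a b x where "F = Dia (Seq a b) x" "dlin p F {Dia a (Dia b x)} (Dia a (Dia b x)) cs s u" by blast
    then show ?thesis using gk_dlin[of p F _ _ cs s u f] assms(2,3) by auto
  next
    assume "\<exists>\<psi> x. F = Dia (Test \<psi>) x \<and> dlin p F {\<psi>, x} x cs s u"
    then obtain \<theta> x where "F = Dia (Test \<theta>) x" "dlin p F {\<theta>, x} x cs s u" by blast
    then show ?thesis using gk_dlin[of p F _ _ cs s u f] assms(2,3) by auto
  next
    assume "\<exists>a b. F = Or a b \<and> nx p = None \<and>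
        branch (p\<lparr>gam := {a} \<union> G\<rparr>) (p\<lparr>gam := {b} \<union> G\<rparr>) (restr G) (restr G) cs s u"
    then obtain a b where "F = Or a b" "branch (p\<lparr>gam := {a} \<union> G\<rparr>) (p\<lparr>gam := {b} \<union> G\<rparr>) (restr G) (restr G) cs s u" by blast
    then show ?thesis using fG fd by (intro gk_branch_restr[OF _ assms(2)]) auto
  next
    assume "\<exists>\<psi> x. F = Box (Test \<psi>) x \<and> nx p = None \<and>
        branch (p\<lparr>gam := {sim \<psi>} \<union> G\<rparr>) (p\<lparr>gam := {x} \<union> G\<rparr>) (restr G) (restr G) cs s u"
    then obtain \<theta> x where "F = Box (Test \<theta>) x" "branch (p\<lparr>gam := {sim \<theta>} \<union> G\<rparr>) (p\<lparr>gam := {x} \<union> G\<rparr>) (restr G) (restr G) cs s u" by blast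
    then show ?thesis using fG fd by (intro gk_branch_restr[OF _ assms(2)]) auto
  next
    assume "\<exists>a1 a2 x. F = Dia (Choice a1 a2) x \<and> (nx p = None \<or> nx p = Some F) \<and>
        branch (p\<lparr>gam := {Dia a1 x} \<union> G, nx := tst (Dia a1 x), bd := bl (Dia a1 x) (bd p)\<rparr>)
               (p\<lparr>gam := {Dia a2 x} \<union> G, nx := tst (Dia a2 x), bd := bl (Dia a2 x) (bd p)\<rparr>)
               (\<lambda>u1 c1 c2. if c1 = F then u1 (Dia a1 x) c2 else if c1 \<in> G then u1 c1 c2 else None)
               (\<lambda>u2 c1 c2. if c1 = F then u2 (Dia a2 x) c2 else if c1 \<in> G then u2 c1 c2 else None)
               cs s u"
    then obtain a1 a2 x where F: "F = Dia (Choice a1 a2) x" and b: "branch (p\<lparr>gam := {Dia a1 x} \<union> G, nx := tst (Dia a1 x), bd := bl (Dia a1 x) (bd p)\<rparr>)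
               (p\<lparr>gam := {Dia a2 x} \<union> G, nx := tst (Dia a2 x), bd := bl (Dia a2 x) (bd p)\<rparr>)
               (\<lambda>u1 c1 c2. if c1 = F then u1 (Dia a1 x) c2 else if c1 \<in> G then u1 c1 c2 else None)
               (\<lambda>u2 c1 c2. if c1 = F then u2 (Dia a2 x) c2 else if c1 \<in> G then u2 c1 c2 else None)
               cs s u" by blast
    show ?thesis
      by (rule gk_branch_dia[OF b assms(2,3) G_def, of "Dia a1 x" "Dia a2 x"]) (use F fG in auto)
  next
    assume "\<exists>a x. F = Dia (Star a) x \<and> (nx p = None \<or> nx p = Some F) \<and> F \<notin> bd p \<and>
        branch (p\<lparr>gam := {x} \<union> G, nx := tst x, bd := bl x (insert F (bd p))\<rparr>)
               (p\<lparr>gam := {Dia a F} \<union> G, nx := tst (Dia a F), bd := bl (Dia a F) (insert F (bd p))\<rparr>)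
               (\<lambda>u1 c1 c2. if c1 = F \<and> c2 = F then None else if c1 = F then u1 x c2
                           else if c1 \<in> G then u1 c1 c2 else None)
               (\<lambda>u2 c1 c2. if c1 = F then u2 (Dia a F) c2 else if c1 \<in> G then u2 c1 c2 else None)
               cs s u"
    then obtain a x where F: "F = Dia (Star a) x" and b: "branch (p\<lparr>gam := {x} \<union> G, nx := tst x, bd := bl x (insert F (bd p))\<rparr>)
               (p\<lparr>gam := {Dia a F} \<union> G, nx := tst (Dia a F), bd := bl (Dia a F) (insert F (bd p))\<rparr>)
               (\<lambda>u1 c1 c2. if c1 = F \<and> c2 = F then None else if c1 = F then u1 x c2
                           else if c1 \<in> G then u1 c1 c2 else None)
               (\<lambda>u2 c1 c2. if c1 = F then u2 (Dia a F) c2 else if c1 \<in> G then u2 c1 c2 else None)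
               cs s u" by blast
    show ?thesis
      by (rule gk_branch_dia[OF b assms(2,3) G_def, of x "Dia a F"]) (use F fG in auto)
  next
    assume "rule_star2 p F cs s u"
    then show ?thesis using assms(2) unfolding rule_star2_def by simp
  qed
qed

definition good :: "'w set \<Rightarrow> ('w \<Rightarrow> fml set) \<Rightarrow> fml \<Rightarrow> ('w \<times> fml) \<Rightarrow> bool" where
  "good W L \<psi> x \<longleftrightarrow> fst x \<in> W \<and> snd x \<in> ppre \<psi> \<and> snd x \<in> L (fst x)"

definition stp :: "(nat \<Rightarrow> ('w \<times> 'w) set) \<Rightarrow> ('w \<times> fml) \<Rightarrow> ('w \<times> fml) \<Rightarrow> bool" where
  "stp R x y \<longleftrightarrow> (case atdia_parts (snd x) of
           Some (a, \<chi>) \<Rightarrow> snd y = \<chi> \<and> (fst x, fst y) \<in> R a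
         | None \<Rightarrow> snd y \<in> leads (snd x) \<and> fst x = fst y)"

fun vch :: "'w set \<Rightarrow> (nat \<Rightarrow> ('w \<times> 'w) set) \<Rightarrow> ('w \<Rightarrow> fml set) \<Rightarrow> fml \<Rightarrow> ('w \<times> fml) list \<Rightarrow> bool" where
  "vch W R L \<psi> [] = False"
| "vch W R L \<psi> [x] = good W L \<psi> x"
| "vch W R L \<psi> (x # y # r) = (good W L \<psi> x \<and> snd x \<noteq> \<psi> \<and> stp R x y \<and> vch W R L \<psi> (y # r))"

lemma vch_nonempty: "vch W R L \<psi> c \<Longrightarrow> c \<noteq> []"
  by (cases c) auto

lemma vch_cons: "vch W R L \<psi> c \<Longrightarrow> good W L \<psi> x \<Longrightarrow> snd x \<noteq> \<psi> \<Longrightarrow> stp R x (hd c) \<Longrightarrow> vch W R L \<psi> (x # c)"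
  by (cases c) auto

lemma vch_hd_good: "vch W R L \<psi> c \<Longrightarrow> good W L \<psi> (hd c)"
  by (cases c; cases "tl c") auto

lemma vch_join: "vch W R L \<psi> c1 \<Longrightarrow> vch W R L \<psi> c2 \<Longrightarrow> last c1 = hd c2 \<Longrightarrow> vch W R L \<psi> (butlast c1 @ c2)"
proof (induction c1)
  case Nil then show ?case by simp
next
  case (Cons x r)
  show ?case
  proof (cases r)
    case Nil then show ?thesis using Cons.prems by (cases c2) auto
  next
    case (Cons y r')
    have v: "good W L \<psi> x" "snd x \<noteq> \<psi>" "stp R x y" "vch W R L \<psi> (y # r')"
      using Cons.prems(1) \<open>r = y # r'\<close> by auto
    have ih: "vch W R L \<psi> (butlast (y # r') @ c2)" using Cons.IH v(4) Cons.prems(2,3) \<open>r = y # r'\<close> by simp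
    have h: "hd (butlast (y # r') @ c2) = y"
      using Cons.prems(3) \<open>r = y # r'\<close> by (cases r') auto
    have "vch W R L \<psi> (x # (butlast (y # r') @ c2))" using vch_cons[OF ih v(1,2)] v(3) h by simp
    then show ?thesis using \<open>r = y # r'\<close> by simp
  qed
qed

lemma vch_idx:
  "vch W R L \<psi> c \<Longrightarrow> (\<forall>i<length c. good W L \<psi> (c!i)) \<and> (\<forall>i. i < length c - 1 \<longrightarrow> snd (c!i) \<noteq> \<psi>) \<and>
     (\<forall>i. Suc i < length c \<longrightarrow> stp R (c!i) (c!Suc i))"
proof (induction W R L \<psi> c rule: vch.induct)
  case (3 W R L \<psi> x y r)
  then have h: "good W L \<psi> x" "snd x \<noteq> \<psi>" "stp R x y" "vch W R L \<psi> (y # r)" by auto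
  note ih = "3.IH"[OF h(4)]
  show ?case
  proof (intro conjI allI impI)
    fix i assume "i < length (x # y # r)"
    then show "good W L \<psi> ((x # y # r) ! i)" using ih h(1) by (cases i) auto
  next
    fix i assume "i < length (x # y # r) - 1"
    then show "snd ((x # y # r) ! i) \<noteq> \<psi>" using ih h(2) by (cases i) auto
  next
    fix i assume "Suc i < length (x # y # r)"
    then show "stp R ((x # y # r) ! i) ((x # y # r) ! Suc i)" using ih h(3) by (cases i) auto
  qed
qed auto

lemma vch_fc:
  assumes "vch W R L \<psi> c" "hd c = (w, Dia \<beta> \<psi>)" "snd (last c) = \<psi>"
  shows "fulfilling_chain W R L \<psi> \<beta> w c"
proof -
  have ne: "c \<noteq> []" using vch_nonempty assms(1) by blast
  note i = vch_idx[OF assms(1)]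
  have "c ! 0 = (w, Dia \<beta> \<psi>)" using assms(2) ne by (simp add: hd_conv_nth)
  then show ?thesis unfolding fulfilling_chain_def using ne i assms(3)
    unfolding good_def stp_def by blast
qed

lemma hd_bl: "c1 \<noteq> [] \<Longrightarrow> last c1 = hd c2 \<Longrightarrow> hd (butlast c1 @ c2) = hd c1"
proof (cases "butlast c1 = []")
  case True
  assume ne: "c1 \<noteq> []" and l: "last c1 = hd c2"
  have "c1 = butlast c1 @ [last c1]" using append_butlast_last_id[OF ne] by simp
  then have "c1 = [last c1]" using True by simp
  then show ?thesis using True l by (metis append_Nil list.sel(1))
next
  case False
  assume ne: "c1 \<noteq> []"
  have "c1 = butlast c1 @ [last c1]" using append_butlast_last_id[OF ne] by simp
  then have "hd c1 = hd (butlast c1)" using False by (metis hd_append2)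
  then show ?thesis using False by simp
qed

lemma not_atdia_parts: "\<not> is_atdia f \<Longrightarrow> atdia_parts f = None"
  unfolding is_atdia_def by (cases f rule: atdia_parts.cases) auto

lemma atdia_parts_AP: "atdia_parts (Dia (AP a) \<phi>) = Some (a, \<phi>)" by simp

locale TC =
  fixes T :: tab and \<phi>0 :: fml
  assumes expT: "expanded_tableau T"
    and rootT: "tnode T = \<lparr>gam = {\<phi>0}, hcr = [], nx = None, bd = {}, bb = {}\<rparr>"
    and openT: "tstat T = Open"
begin

definition nd :: "nat list \<Rightarrow> pnode" where "nd \<pi> = tnode (subt T \<pi>)"
definition stt :: "nat list \<Rightarrow> stat" where "stt \<pi> = tstat (subt T \<pi>)"
definition uv :: "nat list \<Rightarrow> uevt" where "uv \<pi> = tuev (subt T \<pi>)"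
definition ks :: "nat list \<Rightarrow> tab list" where "ks \<pi> = kids (subt T \<pi>)"
definition hl :: "nat list \<Rightarrow> nat" where "hl \<pi> = length (hcr (nd \<pi>))"

lemma rstep: "vpos T \<pi> \<Longrightarrow> rule_step (nd \<pi>) (map tinfo (ks \<pi>)) (stt \<pi>) (uv \<pi>)"
  unfolding nd_def ks_def stt_def uv_def using exp_rule exp_subt expT by blast

lemma kid_info: "i < length (ks \<pi>) \<Longrightarrow> map tinfo (ks \<pi>) ! i = (nd (\<pi>@[i]), stt (\<pi>@[i]), uv (\<pi>@[i]))"
  unfolding nd_def ks_def stt_def uv_def by (simp add: subt_snoc tinfo_eq)

lemma vpos_child: "vpos T (\<pi>@[i]) \<longleftrightarrow> vpos T \<pi> \<and> i < length (ks \<pi>)"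
  unfolding ks_def by (rule vpos_snoc)

lemma step_cases:
  assumes "vpos T (\<pi>@[i])"
  shows "((\<exists>F. prin_rule (nd \<pi>) F (map tinfo (ks \<pi>)) (stt \<pi>) (uv \<pi>)) \<and> hcr (nd (\<pi>@[i])) = hcr (nd \<pi>))
    \<or> (rule_ex (nd \<pi>) (map tinfo (ks \<pi>)) (stt \<pi>) (uv \<pi>) \<and> (\<exists>e. hcr (nd (\<pi>@[i])) = hcr (nd \<pi>) @ [e]))"
proof -
  have v: "vpos T \<pi>" "i < length (ks \<pi>)" using assms vpos_child by auto
  have ki: "fst (map tinfo (ks \<pi>) ! i) = nd (\<pi>@[i])" using kid_info[OF v(2)] by simp
  from rstep[OF v(1)] show ?thesis unfolding rule_step_def
  proof (elim disjE exE)
    assume "rule_id (nd \<pi>) (map tinfo (ks \<pi>)) (stt \<pi>) (uv \<pi>)"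
    then show ?thesis using v(2) by (simp add: rule_id_def)
  next
    fix F assume pr: "prin_rule (nd \<pi>) F (map tinfo (ks \<pi>)) (stt \<pi>) (uv \<pi>)"
    have "hcr (nd (\<pi>@[i])) = hcr (nd \<pi>)" using prin_child[OF pr, of i] v(2) ki by simp
    then show ?thesis using pr by blast
  next
    assume re: "rule_ex (nd \<pi>) (map tinfo (ks \<pi>)) (stt \<pi>) (uv \<pi>)"
    then show ?thesis using ex_child[OF re, of i] v(2) ki by force
  qed
qed

lemma hcr_step: "vpos T (\<pi>@[i]) \<Longrightarrow> prefix (hcr (nd \<pi>)) (hcr (nd (\<pi>@[i])))"
  using step_cases by fastforce


lemma hl_root: "hl [] = 0"
  unfolding hl_def nd_def using rootT by simp

lemma step_take:
  assumes "vpos T w" "n < length w"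
  shows "((\<exists>F. prin_rule (nd (take n w)) F (map tinfo (ks (take n w))) (stt (take n w)) (uv (take n w)))
           \<and> hcr (nd (take (Suc n) w)) = hcr (nd (take n w)))
    \<or> (rule_ex (nd (take n w)) (map tinfo (ks (take n w))) (stt (take n w)) (uv (take n w))
           \<and> (\<exists>e. hcr (nd (take (Suc n) w)) = hcr (nd (take n w)) @ [e]))"
proof -
  have "vpos T (take n w @ [w!n])" using assms vpos_take take_Suc_snoc by metis
  then show ?thesis using step_cases take_Suc_snoc[OF assms(2)] by simp
qed

lemma hcr_mono:
  assumes "vpos T w" "m \<le> n" "n \<le> length w"
  shows "prefix (hcr (nd (take m w))) (hcr (nd (take n w)))"
  using assms(2,3)
proof (induction n)
  case 0 then show ?case by simp
next
  case (Suc n)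
  show ?case
  proof (cases "m = Suc n")
    case False
    then have "prefix (hcr (nd (take m w))) (hcr (nd (take n w)))" using Suc by simp
    moreover have "prefix (hcr (nd (take n w))) (hcr (nd (take (Suc n) w)))"
      using step_take[OF assms(1), of n] Suc.prems by auto
    ultimately show ?thesis using prefix_order.trans by blast
  qed simp
qed

lemma hl_mono: "vpos T w \<Longrightarrow> m \<le> n \<Longrightarrow> n \<le> length w \<Longrightarrow> hl (take m w) \<le> hl (take n w)"
  unfolding hl_def using hcr_mono prefix_length_le by blast

lemma hl_step: "vpos T w \<Longrightarrow> n < length w \<Longrightarrow> hl (take (Suc n) w) = hl (take n w) \<or> hl (take (Suc n) w) = Suc (hl (take n w))"
  unfolding hl_def using step_take by fastforce

lemma prin_edge:
  assumes "vpos T w" "n < length w" "hl (take (Suc n) w) = hl (take n w)"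
  shows "\<exists>F. prin_rule (nd (take n w)) F (map tinfo (ks (take n w))) (stt (take n w)) (uv (take n w))"
  using step_take[OF assms(1,2)] assms(3) unfolding hl_def by auto

lemma ex_edge:
  assumes "vpos T w" "n < length w" "hl (take (Suc n) w) \<noteq> hl (take n w)"
  shows "rule_ex (nd (take n w)) (map tinfo (ks (take n w))) (stt (take n w)) (uv (take n w))"
  using step_take[OF assms(1,2)] assms(3) unfolding hl_def by auto

lemma exists_edge:
  assumes "vpos T w" "0 < k" "k \<le> hl (take n w)" "n \<le> length w"
  shows "\<exists>m<n. hl (take m w) = k - 1 \<and> hl (take (Suc m) w) = k"
  using assms(3,4)
proof (induction n)
  case 0 then show ?case using hl_root assms(2) by simp
next
  case (Suc n)
  show ?case
  proof (cases "k \<le> hl (take n w)")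
    case True then have "\<exists>m<n. hl (take m w) = k - 1 \<and> hl (take (Suc m) w) = k" using Suc by simp
    then show ?thesis using less_Suc_eq by blast
  next
    case False
    then have "hl (take (Suc n) w) = Suc (hl (take n w))" "k = hl (take (Suc n) w)"
      using hl_step[OF assms(1), of n] Suc.prems by auto
    then show ?thesis by (intro exI[of _ n]) auto
  qed
qed

definition okp :: "nat list \<Rightarrow> bool" where
  "okp \<pi> \<longleftrightarrow> vpos T \<pi> \<and> (\<forall>n\<le>length \<pi>. stt (take n \<pi>) = Open)"

lemma okp_take: "okp w \<Longrightarrow> okp (take n w)"
  unfolding okp_def using vpos_take by (auto simp: min_def)

lemma okp_open: "okp w \<Longrightarrow> stt w = Open"
  unfolding okp_def by (metis order_refl take_all)

lemma okp_child: "okp \<pi> \<Longrightarrow> i < length (ks \<pi>) \<Longrightarrow> stt (\<pi>@[i]) = Open \<Longrightarrow> okp (\<pi>@[i])"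
  unfolding okp_def using vpos_child
  by (auto simp: le_Suc_eq)

definition W :: "nat list set" where "W = {\<pi>. okp \<pi> \<and> atomic_gam (nd \<pi>)}"

definition L :: "nat list \<Rightarrow> fml set" where
  "L w = \<Union>{gam (nd (take n w)) | n. n \<le> length w \<and> hl (take n w) = hl w}"

definition R :: "nat \<Rightarrow> (nat list \<times> nat list) set" where
  "R a = {(v, w). v \<in> W \<and> w \<in> W \<and> (\<forall>\<psi>. Box (AP a) \<psi> \<in> gam (nd v) \<longrightarrow> \<psi> \<in> L w)}"

lemma L_I: "n \<le> length w \<Longrightarrow> hl (take n w) = hl w \<Longrightarrow> f \<in> gam (nd (take n w)) \<Longrightarrow> f \<in> L w"
  unfolding L_def by blast

lemma L_E: "f \<in> L w \<Longrightarrow> \<exists>n\<le>length w. hl (take n w) = hl w \<and> f \<in> gam (nd (take n w))"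
  unfolding L_def by blast


lemma edge_child:
  assumes "vpos T w" "n < length w"
  shows "w!n < length (ks (take n w)) \<and> fst (map tinfo (ks (take n w)) ! (w!n)) = nd (take (Suc n) w)
    \<and> fst (snd (map tinfo (ks (take n w)) ! (w!n))) = stt (take (Suc n) w)
    \<and> snd (snd (map tinfo (ks (take n w)) ! (w!n))) = uv (take (Suc n) w)"
proof -
  have v: "vpos T (take n w @ [w!n])" using assms vpos_take take_Suc_snoc by metis
  then have "w!n < length (ks (take n w))" using vpos_child by blast
  then show ?thesis using kid_info take_Suc_snoc[OF assms(2)] by simp
qed

lemma atomic_no_prin: "atomic_gam p \<Longrightarrow> \<not> prin_rule p F cs s u"
  using prin_open unfolding atomic_gam_def by blast

lemma open_kind:
  assumes "vpos T \<pi>" "stt \<pi> = Open"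
  shows "(atomic_gam (nd \<pi>) \<and> rule_ex (nd \<pi>) (map tinfo (ks \<pi>)) (stt \<pi>) (uv \<pi>))
   \<or> (\<not> atomic_gam (nd \<pi>) \<and> (\<exists>F. prin_rule (nd \<pi>) F (map tinfo (ks \<pi>)) (stt \<pi>) (uv \<pi>))
       \<and> (\<exists>i<length (ks \<pi>). stt (\<pi>@[i]) = Open))"
proof -
  from rstep[OF assms(1)] show ?thesis unfolding rule_step_def
  proof (elim disjE exE)
    assume "rule_id (nd \<pi>) (map tinfo (ks \<pi>)) (stt \<pi>) (uv \<pi>)"
    then show ?thesis using assms(2) by (simp add: rule_id_def)
  next
    fix F assume pr: "prin_rule (nd \<pi>) F (map tinfo (ks \<pi>)) (stt \<pi>) (uv \<pi>)"
    have na: "\<not> atomic_gam (nd \<pi>)" using atomic_no_prin pr by blast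
    obtain i where "i < length (map tinfo (ks \<pi>))" "fst (snd (map tinfo (ks \<pi>) ! i)) = Open"
      using prin_open[OF pr] assms(2) by blast
    then have "i < length (ks \<pi>)" "stt (\<pi>@[i]) = Open" using kid_info by auto
    then show ?thesis using na pr by blast
  next
    assume re: "rule_ex (nd \<pi>) (map tinfo (ks \<pi>)) (stt \<pi>) (uv \<pi>)"
    then show ?thesis by (auto elim: rule_ex_unf)
  qed
qed

lemma subt_child: "i < length (ks \<pi>) \<Longrightarrow> subt T (\<pi>@[i]) \<in> set (kids (subt T \<pi>))"
  unfolding ks_def by (simp add: subt_snoc)

lemma hl_child_prin:
  assumes "vpos T (\<pi>@[i])" "prin_rule (nd \<pi>) F (map tinfo (ks \<pi>)) (stt \<pi>) (uv \<pi>)"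
  shows "hl (\<pi>@[i]) = hl \<pi>"
proof -
  have i: "i < length (ks \<pi>)" using assms(1) vpos_child by blast
  show ?thesis using prin_child[OF assms(2), of i] i kid_info[OF i] unfolding hl_def by simp
qed

lemma exw_aux:
  "\<forall>\<pi>. subt T \<pi> = t \<longrightarrow> okp \<pi> \<longrightarrow> (\<exists>ext. \<pi> @ ext \<in> W \<and> hl (\<pi> @ ext) = hl \<pi>)"
proof (induction t)
  case (Tab p s u cs)
  show ?case
  proof (intro allI impI)
    fix \<pi> assume st: "subt T \<pi> = Tab p s u cs" and ok: "okp \<pi>"
    have v: "vpos T \<pi>" and o: "stt \<pi> = Open" using ok okp_open unfolding okp_def by auto
    from open_kind[OF v o] show "\<exists>ext. \<pi> @ ext \<in> W \<and> hl (\<pi> @ ext) = hl \<pi>"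
    proof (elim disjE conjE exE)
      assume "atomic_gam (nd \<pi>)"
      then show ?thesis using ok unfolding W_def by (intro exI[of _ "[]"]) auto
    next
      fix F i assume pr: "prin_rule (nd \<pi>) F (map tinfo (ks \<pi>)) (stt \<pi>) (uv \<pi>)"
        and i: "i < length (ks \<pi>)" "stt (\<pi>@[i]) = Open"
      have okc: "okp (\<pi>@[i])" using okp_child ok i by blast
      have "subt T (\<pi>@[i]) \<in> set cs" using subt_child[OF i(1)] st by simp
      then obtain ext where "\<pi>@[i]@ext \<in> W" "hl (\<pi>@[i]@ext) = hl (\<pi>@[i])"
        using Tab.IH okc by fastforce
      moreover have "hl (\<pi>@[i]) = hl \<pi>" using hl_child_prin pr okc unfolding okp_def by blast
      ultimately show ?thesis by (intro exI[of _ "[i]@ext"]) auto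
    qed
  qed
qed

lemma exw: "okp \<pi> \<Longrightarrow> \<exists>ext. \<pi> @ ext \<in> W \<and> hl (\<pi> @ ext) = hl \<pi>"
  using exw_aux by blast


lemma prin_edge_facts:
  assumes "vpos T w" "n < length w"
    "prin_rule (nd (take n w)) F (map tinfo (ks (take n w))) (stt (take n w)) (uv (take n w))"
  shows "F \<in> gam (nd (take n w)) \<and> hcr (nd (take (Suc n) w)) = hcr (nd (take n w)) \<and>
   gam (nd (take n w)) - {F} \<subseteq> gam (nd (take (Suc n) w)) \<and>
   \<not> is_atdia F \<and> \<not> is_atbox F \<and> \<not> is_lit F \<and>
   (bb (nd (take (Suc n) w)) = bb (nd (take n w)) \<or> (\<exists>a x. F = Box (Star a) x \<and> bb (nd (take (Suc n) w)) = insert F (bb (nd (take n w))))) \<and>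
   (alpha_comps F \<subseteq> gam (nd (take (Suc n) w)) \<or> (\<exists>a x. F = Box (Star a) x \<and> F \<in> bb (nd (take n w)))) \<and>
   (\<forall>b1 b2. beta_comps F = Some (b1,b2) \<longrightarrow> b1 \<in> gam (nd (take (Suc n) w)) \<or> b2 \<in> gam (nd (take (Suc n) w))) \<and>
   ((\<exists>a x. F = Dia a x) \<longrightarrow> (\<exists>K \<in> leads F. K \<in> gam (nd (take (Suc n) w))))"
proof -
  note ec = edge_child[OF assms(1,2)]
  have i: "w!n < length (map tinfo (ks (take n w)))" using ec by simp
  have c: "fst (map tinfo (ks (take n w)) ! (w!n)) = nd (take (Suc n) w)" using ec by blast
  from prin_child[OF assms(3) i] show ?thesis unfolding c .
qed

lemma persist:
  assumes "vpos T w" "m \<le> n" "n \<le> length w" "hl (take m w) = hl (take n w)"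
    "f \<in> gam (nd (take m w))" "is_atdia f \<or> is_atbox f \<or> is_lit f"
  shows "f \<in> gam (nd (take n w))"
  using assms(2-5)
proof (induction n)
  case 0 then show ?case by simp
next
  case (Suc n)
  show ?case
  proof (cases "m = Suc n")
    case False
    then have mn: "m \<le> n" using Suc by simp
    have h1: "hl (take m w) \<le> hl (take n w)" "hl (take n w) \<le> hl (take (Suc n) w)"
      using hl_mono[OF assms(1), of m n] hl_mono[OF assms(1), of n "Suc n"] Suc.prems mn by auto
    then have eq: "hl (take n w) = hl (take m w)" "hl (take (Suc n) w) = hl (take n w)" using Suc.prems by auto
    have fn: "f \<in> gam (nd (take n w))"
    proof -
      have nn: "n \<le> length w" using Suc.prems(2) by simp
      have heq: "hl (take m w) = hl (take n w)" using eq(1) by simp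
      show ?thesis using Suc.IH[OF mn nn heq Suc.prems(4)] .
    qed
    have nl: "n < length w" using Suc.prems by simp
    obtain F where pr: "prin_rule (nd (take n w)) F (map tinfo (ks (take n w))) (stt (take n w)) (uv (take n w))"
      using prin_edge[OF assms(1) nl eq(2)] by blast
    note pc = prin_edge_facts[OF assms(1) nl pr]
    have sub: "gam (nd (take n w)) - {F} \<subseteq> gam (nd (take (Suc n) w))"
      using pc by blast
    have "f \<noteq> F" using pc assms(6) by blast
    then show ?thesis using fn sub by blast
  qed (use Suc.prems in simp)
qed


lemma lost_prin:
  assumes "vpos T w" "m \<le> n" "n \<le> length w" "hl (take m w) = hl (take n w)"
    "f \<in> gam (nd (take m w))" "f \<notin> gam (nd (take n w))"
  shows "\<exists>k. m \<le> k \<and> k < n \<and> f \<in> gam (nd (take k w)) \<and> hl (take k w) = hl (take n w) \<and>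
      hl (take (Suc k) w) = hl (take n w) \<and>
      prin_rule (nd (take k w)) f (map tinfo (ks (take k w))) (stt (take k w)) (uv (take k w))"
  using assms(2-6)
proof (induction n)
  case 0 then show ?case by simp
next
  case (Suc n)
  have mn: "m \<le> n" using Suc by (metis le_SucE)
  have h1: "hl (take m w) \<le> hl (take n w)" "hl (take n w) \<le> hl (take (Suc n) w)"
    using hl_mono[OF assms(1), of m n] hl_mono[OF assms(1), of n "Suc n"] Suc.prems mn by auto
  then have eq: "hl (take n w) = hl (take m w)" "hl (take (Suc n) w) = hl (take n w)" using Suc.prems by auto
  show ?case
  proof (cases "f \<in> gam (nd (take n w))")
    case False
    then have "\<exists>k. m \<le> k \<and> k < n \<and> f \<in> gam (nd (take k w)) \<and> hl (take k w) = hl (take n w) \<and>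
      hl (take (Suc k) w) = hl (take n w) \<and>
      prin_rule (nd (take k w)) f (map tinfo (ks (take k w))) (stt (take k w)) (uv (take k w))"
    proof -
      have nn: "n \<le> length w" using Suc.prems(2) by simp
      have heq: "hl (take m w) = hl (take n w)" using eq(1) by simp
      show ?thesis using Suc.IH[OF mn nn heq Suc.prems(4) False] .
    qed
    then show ?thesis using eq less_Suc_eq by metis
  next
    case True
    have nl: "n < length w" using Suc.prems by simp
    obtain F where pr: "prin_rule (nd (take n w)) F (map tinfo (ks (take n w))) (stt (take n w)) (uv (take n w))"
      using prin_edge[OF assms(1) nl eq(2)] by blast
    have "gam (nd (take n w)) - {F} \<subseteq> gam (nd (take (Suc n) w))"
      using prin_edge_facts[OF assms(1) nl pr] by blast
    then have "f = F" using True Suc.prems by blast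
    then show ?thesis using pr True eq mn by (intro exI[of _ n]) auto
  qed
qed


lemma ex_edge_facts:
  assumes "vpos T w" "n < length w"
    "rule_ex (nd (take n w)) (map tinfo (ks (take n w))) (stt (take n w)) (uv (take n w))"
  shows "\<exists>a \<phi>. Dia (AP a) \<phi> \<in> gam (nd (take n w)) \<and>
     gam (nd (take (Suc n) w)) = insert \<phi> (Del (nd (take n w)) a) \<and>
     hcr (nd (take (Suc n) w)) = hcr (nd (take n w)) @ [entry (nd (take n w)) a \<phi>] \<and>
     bb (nd (take (Suc n) w)) = {} \<and>
     (stt (take n w) = Open \<longrightarrow> stt (take (Suc n) w) = Open \<and>
        (\<forall>\<psi> k. is_stardia \<psi> \<and> \<phi> \<in> ppre \<psi> \<and> uv (take (Suc n) w) \<phi> \<psi> = Some k \<longrightarrow> k \<le> hl (take n w)))"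
proof -
  note ec = edge_child[OF assms(1,2)]
  have i: "w!n < length (map tinfo (ks (take n w)))" using ec by simp
  have c: "fst (map tinfo (ks (take n w)) ! (w!n)) = nd (take (Suc n) w)"
    "fst (snd (map tinfo (ks (take n w)) ! (w!n))) = stt (take (Suc n) w)"
    "snd (snd (map tinfo (ks (take n w)) ! (w!n))) = uv (take (Suc n) w)" using ec by blast+
  from ex_child[OF assms(3) i] show ?thesis unfolding c hl_def .
qed

lemma world_ex:
  assumes "w \<in> W"
  shows "rule_ex (nd w) (map tinfo (ks w)) (stt w) (uv w) \<and> stt w = Open"
proof -
  have o: "okp w" "atomic_gam (nd w)" using assms unfolding W_def by auto
  have "stt w = Open" using okp_open o by blast
  moreover have "vpos T w" using o unfolding okp_def by blast
  ultimately show ?thesis using open_kind o(2) by blast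
qed

lemma world_atomic:
  assumes "w \<in> W" "f \<in> L w" "is_atdia f \<or> is_atbox f \<or> is_lit f"
  shows "f \<in> gam (nd w)"
proof -
  have v: "vpos T w" using assms(1) unfolding W_def okp_def by blast
  obtain n where n: "n \<le> length w" "hl (take n w) = hl w" "f \<in> gam (nd (take n w))"
    using L_E[OF assms(2)] by blast
  have "f \<in> gam (nd (take (length w) w))"
    using persist[OF v n(1) order_refl] n assms(3) by simp
  then show ?thesis by simp
qed

lemma L_self: "f \<in> gam (nd w) \<Longrightarrow> f \<in> L w"
  using L_I[of "length w" w f] by simp

lemma bb_inv:
  assumes "vpos T w"
  shows "n \<le> length w \<Longrightarrow> hl (take n w) = hl w \<Longrightarrow> F \<in> bb (nd (take n w)) \<Longrightarrow> alpha_comps F \<subseteq> L w"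
proof (induction n arbitrary: F)
  case 0 then show ?case using rootT by (simp add: nd_def)
next
  case (Suc n)
  have nl: "n < length w" using Suc.prems by simp
  have hm: "hl (take n w) \<le> hl (take (Suc n) w)" "hl (take (Suc n) w) \<le> hl w"
    using hl_mono[OF assms, of n "Suc n"] hl_mono[OF assms, of "Suc n" "length w"] Suc.prems by auto
  show ?case
  proof (cases "hl (take (Suc n) w) = hl (take n w)")
    case True
    obtain G where pr: "prin_rule (nd (take n w)) G (map tinfo (ks (take n w))) (stt (take n w)) (uv (take n w))"
      using prin_edge[OF assms nl True] by blast
    note pc = prin_edge_facts[OF assms nl pr]
    have IH: "\<And>F. F \<in> bb (nd (take n w)) \<Longrightarrow> alpha_comps F \<subseteq> L w"
    proof -
      fix F assume "F \<in> bb (nd (take n w))"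
      moreover have "n \<le> length w" using nl by simp
      moreover have "hl (take n w) = hl w" using True Suc.prems(2) by simp
      ultimately show "alpha_comps F \<subseteq> L w" using Suc.IH by blast
    qed
    have Lc: "gam (nd (take (Suc n) w)) \<subseteq> L w" using L_I Suc.prems(1,2) by blast
    show ?thesis
    proof (cases "F \<in> bb (nd (take n w))")
      case True then show ?thesis using IH by blast
    next
      case False
      then have "F = G" using pc Suc.prems(3) by blast
      then have "alpha_comps F \<subseteq> gam (nd (take (Suc n) w))" using pc False by blast
      then show ?thesis using Lc by blast
    qed
  next
    case False
    have "bb (nd (take (Suc n) w)) = {}"
      using ex_edge_facts[OF assms nl ex_edge[OF assms nl False]] by blast
    then show ?thesis using Suc.prems by simp
  qed
qed

lemma H1:
  assumes "w \<in> W" "Neg (Atom p) \<in> L w" "Atom p \<in> L w"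
  shows False
proof -
  have "Neg (Atom p) \<in> gam (nd w)" "Atom p \<in> gam (nd w)"
    using world_atomic[OF assms(1)] assms(2,3) unfolding is_lit_def by blast+
  then show False using world_ex[OF assms(1)] by (auto elim: rule_ex_unf)
qed

lemma lost_world:
  assumes "w \<in> W" "f \<in> L w" "\<not> (is_atdia f \<or> is_atbox f \<or> is_lit f)"
  shows "\<exists>k<length w. hl (take k w) = hl w \<and> hl (take (Suc k) w) = hl w \<and>
      f \<in> gam (nd (take k w)) \<and>
      prin_rule (nd (take k w)) f (map tinfo (ks (take k w))) (stt (take k w)) (uv (take k w))"
proof -
  have v: "vpos T w" using assms(1) unfolding W_def okp_def by blast
  obtain n where n: "n \<le> length w" "hl (take n w) = hl w" "f \<in> gam (nd (take n w))"
    using L_E[OF assms(2)] by blast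
  have "f \<notin> gam (nd (take (length w) w))"
    using assms(1,3) unfolding W_def atomic_gam_def by auto
  from lost_prin[OF v n(1) order_refl _ n(3) this] n(2) show ?thesis by force
qed

lemma H2:
  assumes "w \<in> W" "f \<in> L w"
  shows "alpha_comps f \<subseteq> L w"
proof (cases "is_atdia f \<or> is_atbox f \<or> is_lit f")
  case True
  then have "alpha_comps f = {}"
    unfolding is_atdia_def is_atbox_def is_lit_def by auto
  then show ?thesis by simp
next
  case False
  have v: "vpos T w" using assms(1) unfolding W_def okp_def by blast
  obtain k where k: "k < length w" "hl (take k w) = hl w" "hl (take (Suc k) w) = hl w"
    "prin_rule (nd (take k w)) f (map tinfo (ks (take k w))) (stt (take k w)) (uv (take k w))"
    using lost_world[OF assms False] by blast
  note pc = prin_edge_facts[OF v k(1) k(4)]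
  have Lc: "gam (nd (take (Suc k) w)) \<subseteq> L w" using L_I k(1,3) by (metis Suc_leI subsetI)
  show ?thesis
  proof (cases "alpha_comps f \<subseteq> gam (nd (take (Suc k) w))")
    case True then show ?thesis using Lc by blast
  next
    case False
    then have "f \<in> bb (nd (take k w))" using pc by blast
    then show ?thesis using bb_inv[OF v _ k(2)] k(1) by simp
  qed
qed

lemma H3:
  assumes "w \<in> W" "f \<in> L w" "beta_comps f = Some (b1, b2)"
  shows "b1 \<in> L w \<or> b2 \<in> L w"
proof (cases "is_atdia f \<or> is_atbox f \<or> is_lit f")
  case True
  then have "beta_comps f = None"
    unfolding is_atdia_def is_atbox_def is_lit_def by auto
  then show ?thesis using assms by simp
next
  case False
  have v: "vpos T w" using assms(1) unfolding W_def okp_def by blast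
  obtain k where k: "k < length w" "hl (take k w) = hl w" "hl (take (Suc k) w) = hl w"
    "prin_rule (nd (take k w)) f (map tinfo (ks (take k w))) (stt (take k w)) (uv (take k w))"
    using lost_world[OF assms(1,2) False] by blast
  note pc = prin_edge_facts[OF v k(1) k(4)]
  have Lc: "gam (nd (take (Suc k) w)) \<subseteq> L w" using L_I k(1,3) by (metis Suc_leI subsetI)
  show ?thesis using pc assms(3) Lc by blast
qed

lemma H5:
  assumes "w \<in> W" "Box (AP a) \<psi> \<in> L w" "(w, v) \<in> R a"
  shows "\<psi> \<in> L v"
proof -
  have "Box (AP a) \<psi> \<in> gam (nd w)" using world_atomic[OF assms(1,2)] by (simp add: is_atbox_def)
  then show ?thesis using assms(3) unfolding R_def by blast
qed


lemma prefix_nth': "prefix xs ys \<Longrightarrow> i < length xs \<Longrightarrow> ys ! i = xs ! i"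
  unfolding prefix_def by (auto simp: nth_append)

lemma ancestor:
  assumes "okp w" "0 < k" "k \<le> hl w" "hcr (nd w) ! (k - 1) = (\<phi>', S)"
  shows "\<exists>m<length w. hl (take m w) = k - 1 \<and> hl (take (Suc m) w) = k \<and>
     gam (nd (take (Suc m) w)) = S \<and> \<phi>' \<in> S \<and>
     (\<forall>\<psi> k'. is_stardia \<psi> \<and> \<phi>' \<in> ppre \<psi> \<and> uv (take (Suc m) w) \<phi>' \<psi> = Some k' \<longrightarrow> k' \<le> k - 1)"
proof -
  have v: "vpos T w" using assms(1) unfolding okp_def by blast
  obtain m where m: "m < length w" "hl (take m w) = k - 1" "hl (take (Suc m) w) = k"
    using exists_edge[OF v assms(2), of "length w"] assms(3) by auto
  have re: "rule_ex (nd (take m w)) (map tinfo (ks (take m w))) (stt (take m w)) (uv (take m w))"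
    using ex_edge[OF v m(1)] m(2,3) assms(2) by simp
  obtain a \<phi> where e: "Dia (AP a) \<phi> \<in> gam (nd (take m w))"
     "gam (nd (take (Suc m) w)) = insert \<phi> (Del (nd (take m w)) a)"
     "hcr (nd (take (Suc m) w)) = hcr (nd (take m w)) @ [entry (nd (take m w)) a \<phi>]"
     "stt (take m w) = Open \<longrightarrow> stt (take (Suc m) w) = Open \<and>
        (\<forall>\<psi> k. is_stardia \<psi> \<and> \<phi> \<in> ppre \<psi> \<and> uv (take (Suc m) w) \<phi> \<psi> = Some k \<longrightarrow> k \<le> hl (take m w))"
    using ex_edge_facts[OF v m(1) re] by blast
  have o: "stt (take m w) = Open" using assms(1) m(1) unfolding okp_def by simp
  have pf: "prefix (hcr (nd (take (Suc m) w))) (hcr (nd w))"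
    using hcr_mono[OF v, of "Suc m" "length w"] m(1) by simp
  have lk: "k - 1 < length (hcr (nd (take (Suc m) w)))" using m(3) assms(2) unfolding hl_def by simp
  have "hcr (nd w) ! (k - 1) = hcr (nd (take (Suc m) w)) ! (k - 1)" using prefix_nth'[OF pf lk] .
  also have "\<dots> = entry (nd (take m w)) a \<phi>" using e(3) m(2) unfolding hl_def by (simp add: nth_append)
  finally have "entry (nd (take m w)) a \<phi> = (\<phi>', S)" using assms(4) by simp
  then have es: "\<phi> = \<phi>'" "S = insert \<phi> (Del (nd (take m w)) a)" unfolding entry_def by auto
  show ?thesis using m e(2) e(4) o es by (intro exI[of _ m]) auto
qed

lemma okp_root: "okp []"
  unfolding okp_def stt_def using openT by simp

lemma W_take_okp: "w \<in> W \<Longrightarrow> okp (take n w)"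
  unfolding W_def using okp_take by blast

lemma L_ext: "okp r \<Longrightarrow> r @ ext \<in> W \<Longrightarrow> hl (r @ ext) = hl r \<Longrightarrow> gam (nd r) \<subseteq> L (r @ ext)"
  using L_I[of "length r" "r @ ext"] by auto

lemma H4:
  assumes "w \<in> W" "Dia (AP a) \<psi> \<in> L w"
  shows "\<exists>v. (w, v) \<in> R a \<and> \<psi> \<in> L v"
proof -
  have d: "Dia (AP a) \<psi> \<in> gam (nd w)" using world_atomic[OF assms(1,2)] by (simp add: is_atdia_def)
  note we = world_ex[OF assms(1)]
  have ow: "okp w" using assms(1) unfolding W_def by blast
  from ex_dia[OF we[THEN conjunct1] we[THEN conjunct2] d]
  show ?thesis
  proof (elim disjE exE conjE)
    fix i assume i: "i < length (map tinfo (ks w))"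
      "gam (fst (map tinfo (ks w) ! i)) = insert \<psi> (Del (nd w) a)"
      "hcr (fst (map tinfo (ks w) ! i)) = hcr (nd w) @ [entry (nd w) a \<psi>]"
      "fst (snd (map tinfo (ks w) ! i)) = Open"
    have i': "i < length (ks w)" using i(1) by simp
    note ki = kid_info[OF i']
    have oc: "okp (w@[i])" using okp_child[OF ow i'] i(4) ki by simp
    obtain ext where ext: "w@[i]@ext \<in> W" "hl (w@[i]@ext) = hl (w@[i])" using exw[OF oc] by auto
    have Lc: "gam (nd (w@[i])) \<subseteq> L (w@[i]@ext)" using L_ext[OF oc] ext by simp
    have g: "gam (nd (w@[i])) = insert \<psi> (Del (nd w) a)" using i(2) ki by simp
    have "(w, w@[i]@ext) \<in> R a" unfolding R_def using assms(1) ext(1) Lc g by (auto simp: Del_def)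
    moreover have "\<psi> \<in> L (w@[i]@ext)" using Lc g by auto
    ultimately show ?thesis by blast
  next
    fix k assume k: "0 < k" "k \<le> length (hcr (nd w))" "hcr (nd w) ! (k - 1) = entry (nd w) a \<psi>"
    obtain m where m: "m < length w" "gam (nd (take (Suc m) w)) = insert \<psi> (Del (nd w) a)"
      using ancestor[OF ow k(1) _ k(3)[unfolded entry_def]] k(2) unfolding hl_def by blast
    have oc: "okp (take (Suc m) w)" using okp_take[OF ow] .
    obtain ext where ext: "take (Suc m) w @ ext \<in> W" "hl (take (Suc m) w @ ext) = hl (take (Suc m) w)"
      using exw[OF oc] by auto
    have Lc: "gam (nd (take (Suc m) w)) \<subseteq> L (take (Suc m) w @ ext)" using L_ext[OF oc] ext by simp
    have "(w, take (Suc m) w @ ext) \<in> R a" unfolding R_def using assms(1) ext(1) Lc m(2) by (auto simp: Del_def)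
    moreover have "\<psi> \<in> L (take (Suc m) w @ ext)" using Lc m(2) by auto
    ultimately show ?thesis by blast
  qed
qed


definition endc :: "prg \<Rightarrow> fml \<Rightarrow> nat \<Rightarrow> (nat list \<times> fml) \<Rightarrow> bool" where
  "endc \<alpha> \<psi> k x \<longleftrightarrow> snd x = \<psi> \<or> (\<exists>a \<phi> j. snd x = Dia (AP a) \<phi> \<and> fst x \<in> W \<and>
     Dia (AP a) \<phi> \<in> gam (nd (fst x)) \<and> Dia (AP a) \<phi> \<in> ppre (Dia (Star \<alpha>) \<psi>) \<and>
     0 < j \<and> j \<le> hl (fst x) \<and> hcr (nd (fst x)) ! (j - 1) = entry (nd (fst x)) a \<phi> \<and> j \<le> k)"

lemma endc_mono: "endc \<alpha> \<psi> k x \<Longrightarrow> k \<le> k' \<Longrightarrow> endc \<alpha> \<psi> k' x"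
  unfolding endc_def by (meson order_trans)

lemma R_I:
  assumes "v \<in> W" "w \<in> W" "Del (nd v) a \<subseteq> L w"
  shows "(v, w) \<in> R a"
  using assms unfolding R_def Del_def by blast

lemma inv_aux:
  "\<forall>\<pi> f. subt T \<pi> = t \<longrightarrow> okp \<pi> \<longrightarrow> f \<in> gam (nd \<pi>) \<longrightarrow> f \<in> ppre (Dia (Star \<alpha>) \<psi>) \<longrightarrow>
     (\<exists>c ext. vch W R L \<psi> c \<and> hd c = (\<pi> @ ext, f) \<and> hl (\<pi> @ ext) = hl \<pi> \<and>
        endc \<alpha> \<psi> (bnd (uv \<pi> f (Dia (Star \<alpha>) \<psi>))) (last c))"
proof (induction t)
  case (Tab p s u cs)
  show ?case
  proof (intro allI impI)
    fix \<pi> f assume st: "subt T \<pi> = Tab p s u cs" and ok: "okp \<pi>" and fg: "f \<in> gam (nd \<pi>)"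
      and fp: "f \<in> ppre (Dia (Star \<alpha>) \<psi>)"
    let ?X = "Dia (Star \<alpha>) \<psi>"
    have v: "vpos T \<pi>" and o: "stt \<pi> = Open" using ok okp_open unfolding okp_def by auto
    have fnt: "f \<noteq> \<psi>" using fp target_notin by metis
    have fpp: "f \<in> ppre \<psi>" using ppre_sub fp by blast
    have IH: "\<And>i g. i < length (ks \<pi>) \<Longrightarrow> okp (\<pi>@[i]) \<Longrightarrow> g \<in> gam (nd (\<pi>@[i])) \<Longrightarrow> g \<in> ppre ?X \<Longrightarrow>
       (\<exists>c ext. vch W R L \<psi> c \<and> hd c = (\<pi>@[i] @ ext, g) \<and> hl (\<pi>@[i] @ ext) = hl (\<pi>@[i]) \<and>
        endc \<alpha> \<psi> (bnd (uv (\<pi>@[i]) g ?X)) (last c))"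
    proof -
      fix i g assume "i < length (ks \<pi>)" "okp (\<pi>@[i])" "g \<in> gam (nd (\<pi>@[i]))" "g \<in> ppre ?X"
      moreover have "subt T (\<pi>@[i]) \<in> set cs" using subt_child[OF \<open>i < length (ks \<pi>)\<close>] st by simp
      ultimately have "\<exists>c ext. vch W R L \<psi> c \<and> hd c = ((\<pi>@[i]) @ ext, g) \<and> hl ((\<pi>@[i]) @ ext) = hl (\<pi>@[i]) \<and>
        endc \<alpha> \<psi> (bnd (uv (\<pi>@[i]) g ?X)) (last c)" using Tab.IH by blast
      then show "\<exists>c ext. vch W R L \<psi> c \<and> hd c = (\<pi>@[i] @ ext, g) \<and> hl (\<pi>@[i] @ ext) = hl (\<pi>@[i]) \<and>
        endc \<alpha> \<psi> (bnd (uv (\<pi>@[i]) g ?X)) (last c)" by simp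
    qed
    from open_kind[OF v o] show "\<exists>c ext. vch W R L \<psi> c \<and> hd c = (\<pi> @ ext, f) \<and> hl (\<pi> @ ext) = hl \<pi> \<and>
        endc \<alpha> \<psi> (bnd (uv \<pi> f ?X)) (last c)"
    proof (elim disjE conjE exE)
      assume at: "atomic_gam (nd \<pi>)" and re: "rule_ex (nd \<pi>) (map tinfo (ks \<pi>)) (stt \<pi>) (uv \<pi>)"
      have piW: "\<pi> \<in> W" using ok at unfolding W_def by blast
      obtain a0 h0 where fd: "f = Dia a0 h0" using ppre_isdia[OF fp] by blast
      then obtain a \<phi> where fa: "f = Dia (AP a) \<phi>"
        using at fg unfolding atomic_gam_def is_atdia_def is_atbox_def is_lit_def by blast
      have ne: "f \<noteq> ?X" using fa by simp
      have php: "\<phi> \<in> ppre ?X" using ppre_dia_inv fp fa ne by blast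
      have gf: "good W L \<psi> (\<pi>, f)" unfolding good_def using piW fpp L_self[OF fg] by simp
      from ex_dia[OF re o fg[unfolded fa]] show ?thesis
      proof (elim disjE exE conjE)
        fix i assume i: "i < length (map tinfo (ks \<pi>))"
          "gam (fst (map tinfo (ks \<pi>) ! i)) = insert \<phi> (Del (nd \<pi>) a)"
          "fst (snd (map tinfo (ks \<pi>) ! i)) = Open"
          "\<forall>\<chi>2. is_stardia \<chi>2 \<and> Dia (AP a) \<phi> \<in> ppre \<chi>2 \<longrightarrow>
              uv \<pi> (Dia (AP a) \<phi>) \<chi>2 = snd (snd (map tinfo (ks \<pi>) ! i)) \<phi> \<chi>2"
        have i': "i < length (ks \<pi>)" using i(1) by simp
        note ki = kid_info[OF i']
        have oc: "okp (\<pi>@[i])" using okp_child[OF ok i'] i(3) ki by simp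
        have gc: "gam (nd (\<pi>@[i])) = insert \<phi> (Del (nd \<pi>) a)" using i(2) ki by simp
        have ueq: "uv \<pi> f ?X = uv (\<pi>@[i]) \<phi> ?X" using i(4) fa fp ki by (simp add: is_stardia_def)
        obtain c' ext' where c': "vch W R L \<psi> c'" "hd c' = (\<pi>@[i] @ ext', \<phi>)"
          "hl (\<pi>@[i] @ ext') = hl (\<pi>@[i])" "endc \<alpha> \<psi> (bnd (uv (\<pi>@[i]) \<phi> ?X)) (last c')"
          using IH[OF i' oc _ php] gc by blast
        have wW: "\<pi>@[i]@ext' \<in> W" using vch_hd_good[OF c'(1)] c'(2) unfolding good_def by simp
        have Lc: "gam (nd (\<pi>@[i])) \<subseteq> L (\<pi>@[i]@ext')" using L_ext[OF oc] wW c'(3) by simp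
        have Rr: "(\<pi>, \<pi>@[i]@ext') \<in> R a" using R_I[OF piW wW] Lc gc by blast
        have "stp R (\<pi>, f) (hd c')" unfolding stp_def using fa c'(2) Rr by simp
        then have vc: "vch W R L \<psi> ((\<pi>, f) # c')" using vch_cons[OF c'(1) gf] fnt by simp
        have "last ((\<pi>, f) # c') = last c'" using vch_nonempty[OF c'(1)] by simp
        then show ?thesis using vc c'(4) ueq by (intro exI[of _ "(\<pi>, f) # c'"] exI[of _ "[]"]) simp
      next
        fix k assume k: "0 < k" "k \<le> length (hcr (nd \<pi>))" "hcr (nd \<pi>) ! (k - 1) = entry (nd \<pi>) a \<phi>"
          "\<forall>\<chi>2. is_stardia \<chi>2 \<and> Dia (AP a) \<phi> \<in> ppre \<chi>2 \<longrightarrow> uv \<pi> (Dia (AP a) \<phi>) \<chi>2 = Some k"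
        have ueq: "uv \<pi> f ?X = Some k" using k(4) fa fp by (simp add: is_stardia_def)
        have "endc \<alpha> \<psi> (bnd (uv \<pi> f ?X)) (\<pi>, f)" unfolding endc_def
          using piW fg fp fa k ueq unfolding hl_def by auto
        then show ?thesis using gf by (intro exI[of _ "[(\<pi>, f)]"] exI[of _ "[]"]) simp
      qed
    next
      fix F i assume na: "\<not> atomic_gam (nd \<pi>)"
        and pr: "prin_rule (nd \<pi>) F (map tinfo (ks \<pi>)) (stt \<pi>) (uv \<pi>)"
      obtain i \<chi>' where g: "i < length (map tinfo (ks \<pi>))" "fst (snd (map tinfo (ks \<pi>) ! i)) = Open"
        "\<chi>' \<in> gam (fst (map tinfo (ks \<pi>) ! i))" "\<chi>' = f \<or> (f = F \<and> \<chi>' \<in> leads F)"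
        "\<chi>' = \<psi> \<or> bnd (snd (snd (map tinfo (ks \<pi>) ! i)) \<chi>' ?X) \<le> bnd (uv \<pi> f ?X)"
        using prin_goodkid[OF pr o fg fp] unfolding goodkid_def by blast
      have i': "i < length (ks \<pi>)" using g(1) by simp
      note ki = kid_info[OF i']
      have oc: "okp (\<pi>@[i])" using okp_child[OF ok i'] g(2) ki by simp
      have vc: "vpos T (\<pi>@[i])" using oc unfolding okp_def by blast
      have hc: "hl (\<pi>@[i]) = hl \<pi>" using hl_child_prin[OF vc pr] .
      have cg: "\<chi>' \<in> gam (nd (\<pi>@[i]))" using g(3) ki by simp
      have Fna: "\<not> is_atdia F" using prin_open[OF pr] by blast
      have Lf: "\<And>ext. hl (\<pi>@[i]@ext) = hl (\<pi>@[i]) \<Longrightarrow> f \<in> L (\<pi>@[i]@ext)"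
        using L_I[of "length \<pi>"] fg hc by simp
      show ?thesis
      proof (cases "\<chi>' = \<psi>")
        case True
        then have fF: "f = F" "\<psi> \<in> leads F" using g(4) fnt by auto
        obtain ext where ext: "\<pi>@[i]@ext \<in> W" "hl (\<pi>@[i]@ext) = hl (\<pi>@[i])" using exw[OF oc] by auto
        let ?v = "\<pi>@[i]@ext"
        have g1: "good W L \<psi> (?v, f)" unfolding good_def using ext Lf fpp by simp
        have g2: "good W L \<psi> (?v, \<psi>)" unfolding good_def using ext L_ext[OF oc] cg True ppre_self by auto
        have "stp R (?v, f) (?v, \<psi>)" unfolding stp_def using not_atdia_parts[OF Fna] fF by simp
        then have "vch W R L \<psi> [(?v, f), (?v, \<psi>)]" using g1 g2 fnt by simp
        moreover have "endc \<alpha> \<psi> (bnd (uv \<pi> f ?X)) (?v, \<psi>)" unfolding endc_def by simp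
        ultimately show ?thesis using ext(2) hc by (intro exI[of _ "[(?v, f), (?v, \<psi>)]"] exI[of _ "[i]@ext"]) simp
      next
        case False
        have cp: "\<chi>' \<in> ppre ?X" using g(4) leads_ppre[of F \<alpha> \<psi> \<chi>'] fp False by auto
        have bb': "bnd (uv (\<pi>@[i]) \<chi>' ?X) \<le> bnd (uv \<pi> f ?X)" using g(5) False ki by simp
        obtain c' ext' where c': "vch W R L \<psi> c'" "hd c' = (\<pi>@[i] @ ext', \<chi>')"
          "hl (\<pi>@[i] @ ext') = hl (\<pi>@[i])" "endc \<alpha> \<psi> (bnd (uv (\<pi>@[i]) \<chi>' ?X)) (last c')"
          using IH[OF i' oc cg cp] by blast
        have en: "endc \<alpha> \<psi> (bnd (uv \<pi> f ?X)) (last c')" using endc_mono[OF c'(4) bb'] .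
        show ?thesis
        proof (cases "\<chi>' = f")
          case True
          then show ?thesis using c' en hc by (intro exI[of _ c'] exI[of _ "[i]@ext'"]) simp
        next
          case False
          then have fF: "f = F" "\<chi>' \<in> leads F" using g(4) by auto
          let ?v = "\<pi>@[i]@ext'"
          have wW: "?v \<in> W" using vch_hd_good[OF c'(1)] c'(2) unfolding good_def by simp
          have g1: "good W L \<psi> (?v, f)" unfolding good_def using wW Lf c'(3) fpp by simp
          have "stp R (?v, f) (hd c')" unfolding stp_def using not_atdia_parts[OF Fna] fF c'(2) by simp
          then have vc: "vch W R L \<psi> ((?v, f) # c')" using vch_cons[OF c'(1) g1] fnt by simp
          have "last ((?v, f) # c') = last c'" using vch_nonempty[OF c'(1)] by simp
          then show ?thesis using vc en c'(3) hc by (intro exI[of _ "(?v, f) # c'"] exI[of _ "[i]@ext'"]) simp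
        qed
      qed
    qed
  qed
qed

lemma inv:
  assumes "okp \<pi>" "f \<in> gam (nd \<pi>)" "f \<in> ppre (Dia (Star \<alpha>) \<psi>)"
  shows "\<exists>c ext. vch W R L \<psi> c \<and> hd c = (\<pi> @ ext, f) \<and> hl (\<pi> @ ext) = hl \<pi> \<and>
        endc \<alpha> \<psi> (bnd (uv \<pi> f (Dia (Star \<alpha>) \<psi>))) (last c)"
  using inv_aux assms by blast


lemma cont_aux:
  "\<forall>w a \<phi>. w \<in> W \<longrightarrow> Dia (AP a) \<phi> \<in> gam (nd w) \<longrightarrow> Dia (AP a) \<phi> \<in> ppre (Dia (Star \<alpha>) \<psi>) \<longrightarrow>
     0 < k \<longrightarrow> k \<le> hl w \<longrightarrow> hcr (nd w) ! (k - 1) = entry (nd w) a \<phi> \<longrightarrow>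
     (\<exists>c. vch W R L \<psi> c \<and> hd c = (w, Dia (AP a) \<phi>) \<and> snd (last c) = \<psi>)"
proof (induction k rule: less_induct)
  case (less k)
  show ?case
  proof (intro allI impI)
    fix w a \<phi>
    assume wW: "w \<in> W" and dg: "Dia (AP a) \<phi> \<in> gam (nd w)" and dp: "Dia (AP a) \<phi> \<in> ppre (Dia (Star \<alpha>) \<psi>)"
      and k: "0 < k" "k \<le> hl w" "hcr (nd w) ! (k - 1) = entry (nd w) a \<phi>"
    let ?X = "Dia (Star \<alpha>) \<psi>"
    have ow: "okp w" using wW unfolding W_def by blast
    obtain m where m: "m < length w" "gam (nd (take (Suc m) w)) = insert \<phi> (Del (nd w) a)"
      "\<forall>\<psi>' k'. is_stardia \<psi>' \<and> \<phi> \<in> ppre \<psi>' \<and> uv (take (Suc m) w) \<phi> \<psi>' = Some k' \<longrightarrow> k' \<le> k - 1"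
      using ancestor[OF ow k(1,2) k(3)[unfolded entry_def]] by blast
    let ?r = "take (Suc m) w"
    have orr: "okp ?r" using okp_take[OF ow] .
    have php: "\<phi> \<in> ppre ?X" using ppre_dia_inv dp by fastforce
    obtain c' ext' where c': "vch W R L \<psi> c'" "hd c' = (?r @ ext', \<phi>)"
          "hl (?r @ ext') = hl ?r" "endc \<alpha> \<psi> (bnd (uv ?r \<phi> ?X)) (last c')"
      using inv[OF orr _ php] m(2) by blast
    have bk: "bnd (uv ?r \<phi> ?X) \<le> k - 1"
      using m(3) php by (cases "uv ?r \<phi> ?X") (auto simp: is_stardia_def)
    have en: "endc \<alpha> \<psi> (k - 1) (last c')" using endc_mono[OF c'(4) bk] .
    have vW: "?r @ ext' \<in> W" using vch_hd_good[OF c'(1)] c'(2) unfolding good_def by simp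
    have Lc: "gam (nd ?r) \<subseteq> L (?r @ ext')" using L_ext[OF orr vW c'(3)] .
    have Rr: "(w, ?r @ ext') \<in> R a" using R_I[OF wW vW] Lc m(2) by blast
    have gf: "good W L \<psi> (w, Dia (AP a) \<phi>)" unfolding good_def
      using wW ppre_sub[OF dp] L_self[OF dg] by simp
    have ne: "Dia (AP a) \<phi> \<noteq> \<psi>" using dp target_notin by metis
    have "stp R (w, Dia (AP a) \<phi>) (hd c')" unfolding stp_def using c'(2) Rr by simp
    then have v1: "vch W R L \<psi> ((w, Dia (AP a) \<phi>) # c')" using vch_cons[OF c'(1) gf] ne by simp
    have l1: "last ((w, Dia (AP a) \<phi>) # c') = last c'" using vch_nonempty[OF c'(1)] by simp
    show "\<exists>c. vch W R L \<psi> c \<and> hd c = (w, Dia (AP a) \<phi>) \<and> snd (last c) = \<psi>"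
    proof (cases "snd (last c') = \<psi>")
      case True then show ?thesis using v1 l1 by (intro exI[of _ "(w, Dia (AP a) \<phi>) # c'"]) simp
    next
      case False
      then obtain a2 \<phi>2 j where e: "snd (last c') = Dia (AP a2) \<phi>2" "fst (last c') \<in> W"
        "Dia (AP a2) \<phi>2 \<in> gam (nd (fst (last c')))" "Dia (AP a2) \<phi>2 \<in> ppre ?X"
        "0 < j" "j \<le> hl (fst (last c'))" "hcr (nd (fst (last c'))) ! (j - 1) = entry (nd (fst (last c'))) a2 \<phi>2"
        "j \<le> k - 1" using en unfolding endc_def by blast
      have jk: "j < k" using e(8) k(1) by simp
      obtain c2 where c2: "vch W R L \<psi> c2" "hd c2 = (fst (last c'), Dia (AP a2) \<phi>2)" "snd (last c2) = \<psi>"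
        using less.IH[OF jk] e by blast
      have lc: "last ((w, Dia (AP a) \<phi>) # c') = hd c2" using l1 c2(2) e(1) by (simp add: prod_eq_iff)
      have vj: "vch W R L \<psi> (butlast ((w, Dia (AP a) \<phi>) # c') @ c2)" using vch_join[OF v1 c2(1) lc] .
      have bn: "butlast ((w, Dia (AP a) \<phi>) # c') = (w, Dia (AP a) \<phi>) # butlast c'"
        using vch_nonempty[OF c'(1)] by simp
      have "last (butlast ((w, Dia (AP a) \<phi>) # c') @ c2) = last c2" using vch_nonempty[OF c2(1)] by simp
      then show ?thesis using vj bn c2(3) by (intro exI[of _ "butlast ((w, Dia (AP a) \<phi>) # c') @ c2"]) simp
    qed
  qed
qed

lemma finish:
  assumes "vch W R L \<psi> c1" "endc \<alpha> \<psi> k (last c1)"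
  shows "\<exists>c. vch W R L \<psi> c \<and> hd c = hd c1 \<and> snd (last c) = \<psi>"
proof (cases "snd (last c1) = \<psi>")
  case True then show ?thesis using assms by blast
next
  case False
  let ?X = "Dia (Star \<alpha>) \<psi>"
  obtain a2 \<phi>2 j where e: "snd (last c1) = Dia (AP a2) \<phi>2" "fst (last c1) \<in> W"
    "Dia (AP a2) \<phi>2 \<in> gam (nd (fst (last c1)))" "Dia (AP a2) \<phi>2 \<in> ppre ?X"
    "0 < j" "j \<le> hl (fst (last c1))" "hcr (nd (fst (last c1))) ! (j - 1) = entry (nd (fst (last c1))) a2 \<phi>2"
    using assms(2) False unfolding endc_def by blast
  obtain c2 where c2: "vch W R L \<psi> c2" "hd c2 = (fst (last c1), Dia (AP a2) \<phi>2)" "snd (last c2) = \<psi>"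
    using cont_aux e by blast
  have lc: "last c1 = hd c2" using c2(2) e(1) by (simp add: prod_eq_iff)
  have vj: "vch W R L \<psi> (butlast c1 @ c2)" using vch_join[OF assms(1) c2(1) lc] .
  have hd: "hd (butlast c1 @ c2) = hd c1" using hd_bl[OF vch_nonempty[OF assms(1)] lc] .
  have "last (butlast c1 @ c2) = last c2" using vch_nonempty[OF c2(1)] by simp
  then show ?thesis using vj hd c2(3) by (intro exI[of _ "butlast c1 @ c2"]) simp
qed

lemma from_world:
  assumes "w \<in> W" "Dia (AP a) \<phi> \<in> gam (nd w)" "Dia (AP a) \<phi> \<in> ppre (Dia (Star \<alpha>) \<psi>)"
  shows "\<exists>c. vch W R L \<psi> c \<and> hd c = (w, Dia (AP a) \<phi>) \<and> snd (last c) = \<psi>"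
proof -
  let ?X = "Dia (Star \<alpha>) \<psi>"
  let ?f = "Dia (AP a) \<phi>"
  note we = world_ex[OF assms(1)]
  have ow: "okp w" using assms(1) unfolding W_def by blast
  have php: "\<phi> \<in> ppre ?X" using ppre_dia_inv assms(3) by fastforce
  have gf: "good W L \<psi> (w, ?f)" unfolding good_def
    using assms(1) ppre_sub[OF assms(3)] L_self[OF assms(2)] by simp
  have ne: "?f \<noteq> \<psi>" using assms(3) target_notin by metis
  from ex_dia[OF we[THEN conjunct1] we[THEN conjunct2] assms(2)]
  show ?thesis
  proof (elim disjE exE conjE)
    fix i assume i: "i < length (map tinfo (ks w))"
      "gam (fst (map tinfo (ks w) ! i)) = insert \<phi> (Del (nd w) a)"
      "hcr (fst (map tinfo (ks w) ! i)) = hcr (nd w) @ [entry (nd w) a \<phi>]"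
      "fst (snd (map tinfo (ks w) ! i)) = Open"
    have i': "i < length (ks w)" using i(1) by simp
    note ki = kid_info[OF i']
    have oc: "okp (w@[i])" using okp_child[OF ow i'] i(4) ki by simp
    have gc: "gam (nd (w@[i])) = insert \<phi> (Del (nd w) a)" using i(2) ki by simp
    obtain c' ext' where c': "vch W R L \<psi> c'" "hd c' = (w@[i] @ ext', \<phi>)"
          "hl (w@[i] @ ext') = hl (w@[i])" "endc \<alpha> \<psi> (bnd (uv (w@[i]) \<phi> ?X)) (last c')"
      using inv[OF oc _ php] gc by auto
    have vW: "w@[i]@ext' \<in> W" using vch_hd_good[OF c'(1)] c'(2) unfolding good_def by simp
    have Lc: "gam (nd (w@[i])) \<subseteq> L (w@[i]@ext')" using L_ext[OF oc] vW c'(3) by simp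
    have Rr: "(w, w@[i]@ext') \<in> R a" using R_I[OF assms(1) vW] Lc gc by blast
    have "stp R (w, ?f) (hd c')" unfolding stp_def using c'(2) Rr by simp
    then have v1: "vch W R L \<psi> ((w, ?f) # c')" using vch_cons[OF c'(1) gf] ne by simp
    have l1: "last ((w, ?f) # c') = last c'" using vch_nonempty[OF c'(1)] by simp
    show ?thesis using finish[OF v1] c'(4) l1 by fastforce
  next
    fix k assume k: "0 < k" "k \<le> length (hcr (nd w))" "hcr (nd w) ! (k - 1) = entry (nd w) a \<phi>"
    show ?thesis using cont_aux[of \<alpha> \<psi> k] assms k unfolding hl_def by blast
  qed
qed

lemma local_aux:
  assumes wW: "w \<in> W"
  shows "d = length w - n \<Longrightarrow> n \<le> length w \<Longrightarrow> hl (take n w) = hl w \<Longrightarrow> f \<in> gam (nd (take n w)) \<Longrightarrow>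
    f \<in> ppre (Dia (Star \<alpha>) \<psi>) \<Longrightarrow>
    \<exists>c. vch W R L \<psi> c \<and> hd c = (w, f) \<and> (snd (last c) = \<psi> \<or> (\<exists>a \<phi>. last c = (w, Dia (AP a) \<phi>) \<and>
       Dia (AP a) \<phi> \<in> gam (nd w) \<and> Dia (AP a) \<phi> \<in> ppre (Dia (Star \<alpha>) \<psi>)))"
proof (induction d arbitrary: n f)
  case 0
  then have nw: "n = length w" by simp
  then have fg: "f \<in> gam (nd w)" using "0.prems" by simp
  have at: "atomic_gam (nd w)" using wW unfolding W_def by blast
  obtain a0 h0 where "f = Dia a0 h0" using ppre_isdia[OF "0.prems"(5)] by blast
  then obtain a \<phi> where fa: "f = Dia (AP a) \<phi>"
    using at fg unfolding atomic_gam_def is_atdia_def is_atbox_def is_lit_def by blast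
  have "good W L \<psi> (w, f)" unfolding good_def using wW ppre_sub[OF "0.prems"(5)] L_self[OF fg] by simp
  then show ?case using fa fg "0.prems"(5) by (intro exI[of _ "[(w, f)]"]) auto
next
  case (Suc d)
  have v: "vpos T w" using wW unfolding W_def okp_def by blast
  have nl: "n < length w" using Suc.prems(1) by simp
  have hm: "hl (take n w) \<le> hl (take (Suc n) w)" "hl (take (Suc n) w) \<le> hl w"
    using hl_mono[OF v, of n "Suc n"] hl_mono[OF v, of "Suc n" "length w"] nl by auto
  have eq: "hl (take (Suc n) w) = hl (take n w)" "hl (take (Suc n) w) = hl w" using hm Suc.prems(3) by auto
  obtain F where pr: "prin_rule (nd (take n w)) F (map tinfo (ks (take n w))) (stt (take n w)) (uv (take n w))"
    using prin_edge[OF v nl eq(1)] by blast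
  note pc = prin_edge_facts[OF v nl pr]
  have d': "d = length w - Suc n" using Suc.prems(1) by simp
  have sn: "Suc n \<le> length w" using nl by simp
  have fnt: "f \<noteq> \<psi>" using Suc.prems(5) target_notin by metis
  have gf: "good W L \<psi> (w, f)" unfolding good_def
    using wW ppre_sub[OF Suc.prems(5)] L_I[OF Suc.prems(2,3,4)] by simp
  show ?case
  proof (cases "f = F")
    case False
    then have "f \<in> gam (nd (take (Suc n) w))" using pc Suc.prems(4) by blast
    then show ?thesis using Suc.IH[OF d' sn eq(2) _ Suc.prems(5)] by blast
  next
    case True
    have fd: "\<exists>a x. F = Dia a x" using ppre_isdia[OF Suc.prems(5)] True by blast
    obtain K where K: "K \<in> leads F" "K \<in> gam (nd (take (Suc n) w))" using pc fd by blast
    have Fna: "\<not> is_atdia F" using pc by blast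
    have st: "stp R (w, f) (w, K)" unfolding stp_def using not_atdia_parts[OF Fna] True K(1) by simp
    show ?thesis
    proof (cases "K = \<psi>")
      case True
      have "good W L \<psi> (w, \<psi>)" unfolding good_def using wW ppre_self L_I[OF sn eq(2) K(2)] True by simp
      then have "vch W R L \<psi> [(w, f), (w, K)]" using gf fnt st True by simp
      then show ?thesis using True by (intro exI[of _ "[(w, f), (w, K)]"]) simp
    next
      case False
      have kp: "K \<in> ppre (Dia (Star \<alpha>) \<psi>)" using leads_ppre[OF _ K(1)] Suc.prems(5) \<open>f = F\<close> False by blast
      obtain c' where c': "vch W R L \<psi> c'" "hd c' = (w, K)" "snd (last c') = \<psi> \<or> (\<exists>a \<phi>. last c' = (w, Dia (AP a) \<phi>) \<and>
       Dia (AP a) \<phi> \<in> gam (nd w) \<and> Dia (AP a) \<phi> \<in> ppre (Dia (Star \<alpha>) \<psi>))"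
        using Suc.IH[OF d' sn eq(2) K(2) kp] by blast
      have v1: "vch W R L \<psi> ((w, f) # c')" using vch_cons[OF c'(1) gf] fnt st c'(2) by simp
      have "last ((w, f) # c') = last c'" using vch_nonempty[OF c'(1)] by simp
      then show ?thesis using v1 c'(3) by (intro exI[of _ "(w, f) # c'"]) simp
    qed
  qed
qed

lemma H6:
  assumes "w \<in> W" "Dia (Star \<alpha>) \<psi> \<in> L w"
  shows "\<exists>c. fulfilling_chain W R L \<psi> (Star \<alpha>) w c"
proof -
  obtain n where n: "n \<le> length w" "hl (take n w) = hl w" "Dia (Star \<alpha>) \<psi> \<in> gam (nd (take n w))"
    using L_E[OF assms(2)] by blast
  obtain c0 where c0: "vch W R L \<psi> c0" "hd c0 = (w, Dia (Star \<alpha>) \<psi>)"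
    "snd (last c0) = \<psi> \<or> (\<exists>a \<phi>. last c0 = (w, Dia (AP a) \<phi>) \<and>
       Dia (AP a) \<phi> \<in> gam (nd w) \<and> Dia (AP a) \<phi> \<in> ppre (Dia (Star \<alpha>) \<psi>))"
    using local_aux[OF assms(1) refl n ppre_self] by blast
  have "\<exists>c. vch W R L \<psi> c \<and> hd c = (w, Dia (Star \<alpha>) \<psi>) \<and> snd (last c) = \<psi>"
  proof (cases "snd (last c0) = \<psi>")
    case True then show ?thesis using c0 by blast
  next
    case False
    then obtain a \<phi> where e: "last c0 = (w, Dia (AP a) \<phi>)" "Dia (AP a) \<phi> \<in> gam (nd w)"
      "Dia (AP a) \<phi> \<in> ppre (Dia (Star \<alpha>) \<psi>)" using c0(3) by blast
    obtain c1 where c1: "vch W R L \<psi> c1" "hd c1 = (w, Dia (AP a) \<phi>)" "snd (last c1) = \<psi>"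
      using from_world[OF assms(1) e(2,3)] by blast
    have vj: "vch W R L \<psi> (butlast c0 @ c1)" using vch_join[OF c0(1) c1(1)] e(1) c1(2) by simp
    have hd: "hd (butlast c0 @ c1) = hd c0" using hd_bl[OF vch_nonempty[OF c0(1)]] e(1) c1(2) by simp
    have "last (butlast c0 @ c1) = last c1" using vch_nonempty[OF c1(1)] by simp
    then show ?thesis using vj hd c0(2) c1(3) by (intro exI[of _ "butlast c0 @ c1"]) simp
  qed
  then obtain c where "vch W R L \<psi> c" "hd c = (w, Dia (Star \<alpha>) \<psi>)" "snd (last c) = \<psi>" by blast
  then show ?thesis using vch_fc[of W R L \<psi> c w "Star \<alpha>"] by blast
qed

lemma hintikka: "hintikka_structure W R L \<phi>0"
proof -
  obtain ext where ext: "ext \<in> W" "hl ext = 0" using exw[OF okp_root] hl_root by auto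
  have "\<phi>0 \<in> L ext" using L_I[of 0 ext \<phi>0] ext rootT hl_root by (simp add: nd_def)
  then have str: "is_structure W R L \<phi>0" unfolding is_structure_def R_def using ext by blast
  show ?thesis unfolding hintikka_structure_def
  proof (intro conjI str ballI allI impI)
    fix w p assume "w \<in> W" "Neg (Atom p) \<in> L w"
    then show "Atom p \<notin> L w" using H1 by blast
  next
    fix w f assume "w \<in> W" "f \<in> L w" then show "alpha_comps f \<subseteq> L w" using H2 by blast
  next
    fix w f b1 b2 assume "w \<in> W" "f \<in> L w" "beta_comps f = Some (b1, b2)"
    then show "b1 \<in> L w \<or> b2 \<in> L w" using H3 by blast
  next
    fix w a \<phi>' assume "w \<in> W" "Dia (AP a) \<phi>' \<in> L w"
    then show "\<exists>v. (w, v) \<in> R a \<and> \<phi>' \<in> L v" using H4 by blast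
  next
    fix w a \<phi>' v assume "w \<in> W" "Box (AP a) \<phi>' \<in> L w" "(w, v) \<in> R a"
    then show "\<phi>' \<in> L v" using H5 by blast
  next
    fix w \<alpha> \<phi>' assume "w \<in> W" "Dia (Star \<alpha>) \<phi>' \<in> L w"
    then show "\<exists>c. fulfilling_chain W R L \<phi>' (Star \<alpha>) w c" using H6 by blast
  qed
qed

end


lemma fc_map:
  assumes "inj f" "fulfilling_chain W R L \<phi> \<beta> w c"
  shows "fulfilling_chain (f ` W) (\<lambda>a. map_prod f f ` R a) (\<lambda>n. L (inv f n)) \<phi> \<beta> (f w) (map (apfst f) c)"
proof -
  let ?c = "map (apfst f) c"
  have iv: "\<And>x. inv f (f x) = x" using assms(1) by (simp add: inv_f_f)
  note d = assms(2)[unfolded fulfilling_chain_def]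
  have ne: "c \<noteq> []" using d by blast
  have e: "\<And>i. i < length c \<Longrightarrow> ?c ! i = (f (fst (c!i)), snd (c!i))"
    by (simp add: apfst_def map_prod_def split: prod.splits)
  have A: "\<forall>i<length ?c. fst (?c!i) \<in> f ` W \<and> snd (?c!i) \<in> ppre \<phi> \<and> snd (?c!i) \<in> L (inv f (fst (?c!i)))"
  proof (intro allI impI)
    fix i assume "i < length ?c"
    then have i: "i < length c" by simp
    show "fst (?c!i) \<in> f ` W \<and> snd (?c!i) \<in> ppre \<phi> \<and> snd (?c!i) \<in> L (inv f (fst (?c!i)))"
      using d i unfolding e[OF i] by (simp add: iv)
  qed
  have B: "?c ! 0 = (f w, Dia \<beta> \<phi>)" using d ne e[of 0] by simp
  have C: "snd (last ?c) = \<phi>"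
  proof -
    have "last ?c = apfst f (last c)" using ne by (simp add: last_map)
    then show ?thesis using d by (simp add: apfst_def map_prod_def split: prod.splits)
  qed
  have D: "\<forall>i. i < length ?c - 1 \<longrightarrow> snd (?c!i) \<noteq> \<phi>"
  proof (intro allI impI)
    fix i assume "i < length ?c - 1"
    then have i: "i < length c" "i < length c - 1" by auto
    show "snd (?c!i) \<noteq> \<phi>" using d i unfolding e[OF i(1)] by simp
  qed
  have E: "\<forall>i. Suc i < length ?c \<longrightarrow>
        (case atdia_parts (snd (?c!i)) of
           Some (a, \<chi>) \<Rightarrow> snd (?c!Suc i) = \<chi> \<and> (fst (?c!i), fst (?c!Suc i)) \<in> map_prod f f ` R a
         | None \<Rightarrow> snd (?c!Suc i) \<in> leads (snd (?c!i)) \<and> fst (?c!i) = fst (?c!Suc i))"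
  proof (intro allI impI)
    fix i assume "Suc i < length ?c"
    then have i: "Suc i < length c" "i < length c" by auto
    have st: "case atdia_parts (snd (c!i)) of
           Some (a, \<chi>) \<Rightarrow> snd (c!Suc i) = \<chi> \<and> (fst (c!i), fst (c!Suc i)) \<in> R a
         | None \<Rightarrow> snd (c!Suc i) \<in> leads (snd (c!i)) \<and> fst (c!i) = fst (c!Suc i)" using d i(1) by blast
    show "case atdia_parts (snd (?c!i)) of
           Some (a, \<chi>) \<Rightarrow> snd (?c!Suc i) = \<chi> \<and> (fst (?c!i), fst (?c!Suc i)) \<in> map_prod f f ` R a
         | None \<Rightarrow> snd (?c!Suc i) \<in> leads (snd (?c!i)) \<and> fst (?c!i) = fst (?c!Suc i)"
      unfolding e[OF i(1)] e[OF i(2)] using st by (auto split: option.splits)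
  qed
  have F: "?c \<noteq> []" using ne by simp
  show ?thesis unfolding fulfilling_chain_def using A B C D E F by blast
qed

lemma hint_map:
  assumes "inj f" "hintikka_structure W R L \<phi>"
  shows "hintikka_structure (f ` W) (\<lambda>a. map_prod f f ` R a) (\<lambda>n. L (inv f n)) \<phi>"
proof -
  have iv: "\<And>x. inv f (f x) = x" using assms(1) by (simp add: inv_f_f)
  have hW: "W \<noteq> {}" and hR: "\<And>a. R a \<subseteq> W \<times> W" and hv: "\<exists>v\<in>W. \<phi> \<in> L v"
    using assms(2) unfolding hintikka_structure_def is_structure_def by blast+
  have hw: "\<And>x. x \<in> W \<Longrightarrow> (\<forall>p. Neg (Atom p) \<in> L x \<longrightarrow> Atom p \<notin> L x) \<and>
      (\<forall>g\<in>L x. alpha_comps g \<subseteq> L x) \<and>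
      (\<forall>g\<in>L x. \<forall>b1 b2. beta_comps g = Some (b1, b2) \<longrightarrow> b1 \<in> L x \<or> b2 \<in> L x) \<and>
      (\<forall>a \<phi>'. Dia (AP a) \<phi>' \<in> L x \<longrightarrow> (\<exists>v. (x, v) \<in> R a \<and> \<phi>' \<in> L v)) \<and>
      (\<forall>a \<phi>' v. Box (AP a) \<phi>' \<in> L x \<longrightarrow> (x, v) \<in> R a \<longrightarrow> \<phi>' \<in> L v) \<and>
      (\<forall>\<alpha> \<phi>'. Dia (Star \<alpha>) \<phi>' \<in> L x \<longrightarrow> (\<exists>c. fulfilling_chain W R L \<phi>' (Star \<alpha>) x c))"
    using assms(2) unfolding hintikka_structure_def by blast
  have str: "is_structure (f ` W) (\<lambda>a. map_prod f f ` R a) (\<lambda>n. L (inv f n)) \<phi>"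
    unfolding is_structure_def
  proof (intro conjI allI)
    show "f ` W \<noteq> {}" using hW by blast
  next
    fix a show "map_prod f f ` R a \<subseteq> f ` W \<times> f ` W" using hR[of a] by fastforce
  next
    obtain v where "v \<in> W" "\<phi> \<in> L v" using hv by blast
    then show "\<exists>v\<in>f ` W. \<phi> \<in> L (inv f v)" using iv by (intro bexI[of _ "f v"]) auto
  qed
  show ?thesis unfolding hintikka_structure_def
  proof (intro conjI[OF str] ballI)
    fix w assume "w \<in> f ` W"
    then obtain x where x: "x \<in> W" "w = f x" by blast
    have Lw: "L (inv f w) = L x" using x iv by simp
    note hx = hw[OF x(1)]
    have mp: "\<And>a v. (w, v) \<in> map_prod f f ` R a \<Longrightarrow> \<exists>y. v = f y \<and> (x, y) \<in> R a"
      using x assms(1) by (auto simp: inj_eq)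
    show "(\<forall>p. Neg (Atom p) \<in> L (inv f w) \<longrightarrow> Atom p \<notin> L (inv f w)) \<and>
      (\<forall>g\<in>L (inv f w). alpha_comps g \<subseteq> L (inv f w)) \<and>
      (\<forall>g\<in>L (inv f w). \<forall>b1 b2. beta_comps g = Some (b1, b2) \<longrightarrow> b1 \<in> L (inv f w) \<or> b2 \<in> L (inv f w)) \<and>
      (\<forall>a \<phi>'. Dia (AP a) \<phi>' \<in> L (inv f w) \<longrightarrow> (\<exists>v. (w, v) \<in> map_prod f f ` R a \<and> \<phi>' \<in> L (inv f v))) \<and>
      (\<forall>a \<phi>' v. Box (AP a) \<phi>' \<in> L (inv f w) \<longrightarrow> (w, v) \<in> map_prod f f ` R a \<longrightarrow> \<phi>' \<in> L (inv f v)) \<and>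
      (\<forall>\<alpha> \<phi>'. Dia (Star \<alpha>) \<phi>' \<in> L (inv f w) \<longrightarrow>
          (\<exists>c. fulfilling_chain (f ` W) (\<lambda>a. map_prod f f ` R a) (\<lambda>n. L (inv f n)) \<phi>' (Star \<alpha>) w c))"
      unfolding Lw
    proof (intro conjI)
      show "\<forall>p. Neg (Atom p) \<in> L x \<longrightarrow> Atom p \<notin> L x" using hx by blast
    next
      show "\<forall>g\<in>L x. alpha_comps g \<subseteq> L x" using hx by blast
    next
      show "\<forall>g\<in>L x. \<forall>b1 b2. beta_comps g = Some (b1, b2) \<longrightarrow> b1 \<in> L x \<or> b2 \<in> L x" using hx by blast
    next
      show "\<forall>a \<phi>'. Dia (AP a) \<phi>' \<in> L x \<longrightarrow> (\<exists>v. (w, v) \<in> map_prod f f ` R a \<and> \<phi>' \<in> L (inv f v))"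
      proof (intro allI impI)
        fix a \<phi>' assume "Dia (AP a) \<phi>' \<in> L x"
        then obtain v where v: "(x, v) \<in> R a" "\<phi>' \<in> L v" using hx by blast
        have "(w, f v) \<in> map_prod f f ` R a" using v(1) x(2) by force
        then show "\<exists>v. (w, v) \<in> map_prod f f ` R a \<and> \<phi>' \<in> L (inv f v)" using v(2) iv by metis
      qed
    next
      show "\<forall>a \<phi>' v. Box (AP a) \<phi>' \<in> L x \<longrightarrow> (w, v) \<in> map_prod f f ` R a \<longrightarrow> \<phi>' \<in> L (inv f v)"
      proof (intro allI impI)
        fix a \<phi>' v assume b: "Box (AP a) \<phi>' \<in> L x" "(w, v) \<in> map_prod f f ` R a"
        then obtain y where y: "v = f y" "(x, y) \<in> R a" using mp by blast
        then show "\<phi>' \<in> L (inv f v)" using hx b(1) iv by simp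
      qed
    next
      show "\<forall>\<alpha> \<phi>'. Dia (Star \<alpha>) \<phi>' \<in> L x \<longrightarrow>
          (\<exists>c. fulfilling_chain (f ` W) (\<lambda>a. map_prod f f ` R a) (\<lambda>n. L (inv f n)) \<phi>' (Star \<alpha>) w c)"
      proof (intro allI impI)
        fix \<alpha> \<phi>' assume "Dia (Star \<alpha>) \<phi>' \<in> L x"
        then obtain c where "fulfilling_chain W R L \<phi>' (Star \<alpha>) x c" using hx by blast
        then show "\<exists>c. fulfilling_chain (f ` W) (\<lambda>a. map_prod f f ` R a) (\<lambda>n. L (inv f n)) \<phi>' (Star \<alpha>) w c"
          using fc_map[OF assms(1)] x(2) by blast
      qed
    qed
  qed
qed

theorem theorem4p7:
  fixes \<phi> :: fml and T :: tab
  assumes "is_nnf \<phi>"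
    and "expanded_tableau T"
    and "tnode T = \<lparr>gam = {\<phi>}, hcr = [], nx = None, bd = {}, bb = {}\<rparr>"
    and "tstat T = Open"
  shows "\<exists>(W :: nat set) R L. hintikka_structure W R L \<phi>"
proof -
  interpret TC T \<phi> using assms(2-4) by unfold_locales
  have "hintikka_structure (to_nat ` W) (\<lambda>a. map_prod to_nat to_nat ` R a) (\<lambda>n. L (inv to_nat n)) \<phi>"
    using hint_map[OF inj_to_nat hintikka] .
  then show ?thesis by blast
qed

end
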